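(* Let $A$ be a bounded distributive lattice, $X$ its Priestley space, and $\kappa$ a regular cardinal. (1) $A$ is a complete lattice that is a $\kappa$-frame if and only if $X$ is extremally order disconnected and ${\sf cl}(U)$ is a clopen upset for each $\kappa$-clopen upset $U$. (2) $A$ is a $\kappa$-complete Heyting lattice if and only if $X$ is an Esakia space and ${\sf cl}(U)$ is a clopen upset for each $\kappa$-clopen upset $U$. (3) Every relative annihilator of $A$ belongs to $\mathcal{BL}_\kappa A$ if and only if $X\setminus{\downarrow}U\in{\sf BL}_\kappa(X)$ for each clopen $U\subseteq X$. (4) Every relative annihilator of $A$ is a normal ideal belonging to $\mathcal{BL}_\kappa A$ if and only if $X\setminus{\downarrow}U\in{\sf DM}(X)\cap{\sf BL}_\kappa(X)$ for each clopen $U\subseteq X$.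
   Context: A $\kappa$-frame is a lattice in which all joins of fewer than $\kappa$ elements exist and are distributive ($a\wedge\bigvee S=\bigvee\{a\wedge s\}$); $\kappa$-complete means such joins exist; a Heyting lattice has $\to$ with $a\wedge b\le c\iff a\le b\to c$. A relative annihilator is $\langle a,b\rangle=\{x:a\wedge x\le b\}$; a normal ideal is a downset $N=N^{u\ell}$. $\mathcal{BL} A$ is the frame of D-ideals (downsets containing $\bigvee S$ for each subset $S$ with distributive join), with $A$ identified with its principal downsets, and $\mathcal{BL}_\kappa A$ is the sub-$\kappa$-frame of $\mathcal{BL} A$ generated by $A$. The Priestley space $X$ of $A$ is the set of prime filters ordered by inclusion, with topology generated by $\{\mathfrak s(a)\setminus\mathfrak s(b)\}$, $\mathfrak s(a)=\{x:a\in x\}$. ${\sf cl}$ is topological closure, ${\sf cl_2}(S)={\uparrow}{\sf cl}(S)$, ${\sf int_1}(S)=X\setminus{\downarrow}(X\setminus{\sf int}(S))$. A DM-set is an open upset $U$ with ${\sf int_1\,cl_2}(U)=U$; ${\sf DM}(X)$ is the set of DM-sets. A $\kappa$-clopen upset is a union of fewer than $\kappa$ clopen upsets; ${\sf BL}_\kappa(X)=\{{\sf int_1\,cl}(V): V\text{ a }\kappa\text{-clopen upset}\}$. $X$ is extremally order disconnected if ${\sf cl_2}(U)$ is clopen for every open upset $U$; $X$ is an Esakia space if ${\downarrow}U$ is clopen for every clopen $U\subseteq X$. *)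

theory Defs
  imports "HOL-Analysis.Analysis"
begin

unbundle cardinal_syntax

definition is_join :: "'a::order set \<Rightarrow> 'a \<Rightarrow> bool" where
  "is_join S j \<longleftrightarrow> (\<forall>s\<in>S. s \<le> j) \<and> (\<forall>u. (\<forall>s\<in>S. s \<le> u) \<longrightarrow> j \<le> u)"

definition complete_lat :: "'a::lattice itself \<Rightarrow> bool" where
  "complete_lat _ \<longleftrightarrow> (\<forall>S::'a set. \<exists>j. is_join S j)"

definition kappa_complete :: "'k rel \<Rightarrow> 'a::lattice itself \<Rightarrow> bool" where
  "kappa_complete \<kappa> _ \<longleftrightarrow> (\<forall>S::'a set. |S| <o \<kappa> \<longrightarrow> (\<exists>j. is_join S j))"

definition distributive_join :: "'a::lattice set \<Rightarrow> 'a \<Rightarrow> bool" where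
  "distributive_join S j \<longleftrightarrow> is_join S j \<and> (\<forall>a. is_join ((\<lambda>s. inf a s) ` S) (inf a j))"

definition kappa_frame :: "'k rel \<Rightarrow> 'a::lattice itself \<Rightarrow> bool" where
  "kappa_frame \<kappa> _ \<longleftrightarrow> (\<forall>S::'a set. |S| <o \<kappa> \<longrightarrow> (\<exists>j. distributive_join S j))"

definition heyting :: "'a::lattice itself \<Rightarrow> bool" where
  "heyting _ \<longleftrightarrow> (\<forall>b c::'a. \<exists>i. \<forall>a. inf a b \<le> c \<longleftrightarrow> a \<le> i)"

definition rel_ann :: "'a::lattice \<Rightarrow> 'a \<Rightarrow> 'a set" where
  "rel_ann a b = {x. inf a x \<le> b}"

definition is_downset :: "'a::order set \<Rightarrow> bool" where
  "is_downset D \<longleftrightarrow> (\<forall>x\<in>D. \<forall>y. y \<le> x \<longrightarrow> y \<in> D)"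

definition upper_bounds :: "'a::order set \<Rightarrow> 'a set" where
  "upper_bounds S = {u. \<forall>s\<in>S. s \<le> u}"

definition lower_bounds :: "'a::order set \<Rightarrow> 'a set" where
  "lower_bounds S = {l. \<forall>s\<in>S. l \<le> s}"

definition normal_ideal :: "'a::order set \<Rightarrow> bool" where
  "normal_ideal N \<longleftrightarrow> is_downset N \<and> N = lower_bounds (upper_bounds N)"

definition D_ideal :: "'a::lattice set \<Rightarrow> bool" where
  "D_ideal D \<longleftrightarrow> is_downset D \<and> (\<forall>S j. S \<subseteq> D \<longrightarrow> distributive_join S j \<longrightarrow> j \<in> D)"

text \<open>join in the frame BL A of D-ideals: the D-ideal generated by the union\<close>
definition D_gen :: "'a::lattice set \<Rightarrow> 'a set" where
  "D_gen S = \<Inter>{D. D_ideal D \<and> S \<subseteq> D}"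

inductive_set BLk :: "'k rel \<Rightarrow> 'a::lattice set set" for \<kappa> :: "'k rel" where
  princ: "{..a} \<in> BLk \<kappa>"
| meet: "I \<in> BLk \<kappa> \<Longrightarrow> J \<in> BLk \<kappa> \<Longrightarrow> I \<inter> J \<in> BLk \<kappa>"
| join: "(\<forall>I\<in>F. I \<in> BLk \<kappa>) \<Longrightarrow> |F| <o \<kappa> \<Longrightarrow> D_gen (\<Union>F) \<in> BLk \<kappa>"

definition prime_filter :: "'a::bounded_lattice set \<Rightarrow> bool" where
  "prime_filter F \<longleftrightarrow> top \<in> F \<and> bot \<notin> F
     \<and> (\<forall>x\<in>F. \<forall>y. x \<le> y \<longrightarrow> y \<in> F)
     \<and> (\<forall>x\<in>F. \<forall>y\<in>F. inf x y \<in> F)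
     \<and> (\<forall>x y. sup x y \<in> F \<longrightarrow> x \<in> F \<or> y \<in> F)"

definition PX :: "'a::bounded_lattice set set" where
  "PX = {F. prime_filter F}"

definition sX :: "'a::bounded_lattice \<Rightarrow> 'a set set" where
  "sX a = {x \<in> PX. a \<in> x}"

definition priestley_top :: "'a::bounded_lattice set topology" where
  "priestley_top = topology_generated_by {sX a - sX b | a b. True}"

text \<open>order on X is inclusion\<close>
definition upX :: "'a::bounded_lattice set set \<Rightarrow> 'a set set" where
  "upX S = {y \<in> PX. \<exists>x\<in>S. x \<subseteq> y}"

definition downX :: "'a::bounded_lattice set set \<Rightarrow> 'a set set" where
  "downX S = {y \<in> PX. \<exists>x\<in>S. y \<subseteq> x}"

definition is_upsetX :: "'a::bounded_lattice set set \<Rightarrow> bool" where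
  "is_upsetX U \<longleftrightarrow> U \<subseteq> PX \<and> (\<forall>x\<in>U. \<forall>y\<in>PX. x \<subseteq> y \<longrightarrow> y \<in> U)"

definition clX :: "'a::bounded_lattice set set \<Rightarrow> 'a set set" where
  "clX S = priestley_top closure_of S"

definition cl2X :: "'a::bounded_lattice set set \<Rightarrow> 'a set set" where
  "cl2X S = upX (clX S)"

definition int1X :: "'a::bounded_lattice set set \<Rightarrow> 'a set set" where
  "int1X S = PX - downX (PX - priestley_top interior_of S)"

definition clopenX :: "'a::bounded_lattice set set \<Rightarrow> bool" where
  "clopenX U \<longleftrightarrow> openin priestley_top U \<and> closedin priestley_top U"

definition clopen_upsetX :: "'a::bounded_lattice set set \<Rightarrow> bool" where
  "clopen_upsetX U \<longleftrightarrow> clopenX U \<and> is_upsetX U"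

definition kappa_clopen_upsetX :: "'k rel \<Rightarrow> 'a::bounded_lattice set set \<Rightarrow> bool" where
  "kappa_clopen_upsetX \<kappa> U \<longleftrightarrow>
     (\<exists>F. |F| <o \<kappa> \<and> (\<forall>V\<in>F. clopen_upsetX V) \<and> U = \<Union>F)"

definition DMX :: "'a::bounded_lattice set set set" where
  "DMX = {U. openin priestley_top U \<and> is_upsetX U \<and> int1X (cl2X U) = U}"

definition BLkX :: "'k rel \<Rightarrow> 'a::bounded_lattice set set set" where
  "BLkX \<kappa> = {int1X (clX V) | V. kappa_clopen_upsetX \<kappa> V}"

definition extremally_order_disconnected :: "'a::bounded_lattice itself \<Rightarrow> bool" where
  "extremally_order_disconnected _ \<longleftrightarrow>
     (\<forall>U::'a set set. openin priestley_top U \<and> is_upsetX U \<longrightarrow> clopenX (cl2X U))"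

definition esakia :: "'a::bounded_lattice itself \<Rightarrow> bool" where
  "esakia _ \<longleftrightarrow> (\<forall>U::'a set set. clopenX U \<longrightarrow> clopenX (downX U))"

end

theory Submission
  imports Defs
begin

definition is_filt :: "'a::{bounded_lattice,distrib_lattice} set \<Rightarrow> bool" where
  "is_filt F \<longleftrightarrow> top \<in> F \<and> (\<forall>x\<in>F. \<forall>y. x \<le> y \<longrightarrow> y \<in> F) \<and> (\<forall>x\<in>F. \<forall>y\<in>F. inf x y \<in> F)"

definition is_idl :: "'a::{bounded_lattice,distrib_lattice} set \<Rightarrow> bool" where
  "is_idl I \<longleftrightarrow> bot \<in> I \<and> (\<forall>x\<in>I. \<forall>y. y \<le> x \<longrightarrow> y \<in> I) \<and> (\<forall>x\<in>I. \<forall>y\<in>I. sup x y \<in> I)"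

lemma PFT:
  fixes F I :: "'a::{bounded_lattice,distrib_lattice} set"
  assumes F: "is_filt F" and I: "is_idl I" and disj: "F \<inter> I = {}"
  shows "\<exists>P. prime_filter P \<and> F \<subseteq> P \<and> P \<inter> I = {}"
proof -
  define \<A> where "\<A> = {G. is_filt G \<and> F \<subseteq> G \<and> G \<inter> I = {}}"
  have "\<A> \<noteq> {}" using F disj unfolding \<A>_def by blast
  moreover have "\<Union>\<C> \<in> \<A>" if C: "\<C> \<noteq> {}" "subset.chain \<A> \<C>" for \<C>
  proof -
    have sub: "\<C> \<subseteq> \<A>" and ch: "\<And>X Y. X \<in> \<C> \<Longrightarrow> Y \<in> \<C> \<Longrightarrow> X \<subseteq> Y \<or> Y \<subseteq> X"
      using C(2) unfolding subset.chain_def by auto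
    obtain G0 where G0: "G0 \<in> \<C>" using C(1) by blast
    have "is_filt (\<Union>\<C>)"
      unfolding is_filt_def
    proof (intro conjI ballI allI impI)
      show "top \<in> \<Union>\<C>" using G0 sub unfolding \<A>_def is_filt_def by blast
    next
      fix x y assume "x \<in> \<Union>\<C>" "x \<le> y"
      then obtain G where "G \<in> \<C>" "x \<in> G" by blast
      then show "y \<in> \<Union>\<C>" using sub \<open>x \<le> y\<close> unfolding \<A>_def is_filt_def by blast
    next
      fix x y assume "x \<in> \<Union>\<C>" "y \<in> \<Union>\<C>"
      then obtain G H where GH: "G \<in> \<C>" "x \<in> G" "H \<in> \<C>" "y \<in> H" by blast
      from ch[OF GH(1) GH(3)] show "inf x y \<in> \<Union>\<C>"
      proof
        assume "G \<subseteq> H" then show ?thesis using GH sub unfolding \<A>_def is_filt_def by blast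
      next
        assume "H \<subseteq> G" then show ?thesis using GH sub unfolding \<A>_def is_filt_def by blast
      qed
    qed
    moreover have "F \<subseteq> \<Union>\<C>" using G0 sub unfolding \<A>_def by blast
    moreover have "\<Union>\<C> \<inter> I = {}" using sub unfolding \<A>_def by blast
    ultimately show ?thesis unfolding \<A>_def by blast
  qed
  ultimately obtain M where M: "M \<in> \<A>" and max: "\<And>X. X \<in> \<A> \<Longrightarrow> M \<subseteq> X \<Longrightarrow> X = M"
    using subset_Zorn_nonempty[of \<A>] by blast
  have Mf: "is_filt M" and FM: "F \<subseteq> M" and MI: "M \<inter> I = {}" using M unfolding \<A>_def by auto
  have ext: "\<exists>p\<in>M. \<exists>i\<in>I. inf p x \<le> i" if "x \<notin> M" for x
  proof (rule ccontr)
    assume nex: "\<not> ?thesis"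
    define G where "G = {z. \<exists>p\<in>M. inf p x \<le> z}"
    have memG: "z \<in> G \<longleftrightarrow> (\<exists>p\<in>M. inf p x \<le> z)" for z unfolding G_def by blast
    have "is_filt G"
      unfolding is_filt_def
    proof (intro conjI ballI allI impI)
      show "top \<in> G" using Mf unfolding is_filt_def memG by auto
    next
      fix u v assume "u \<in> G" "u \<le> v"
      then show "v \<in> G" unfolding memG using order_trans by blast
    next
      fix u v assume "u \<in> G" "v \<in> G"
      then obtain p q where pq: "p \<in> M" "inf p x \<le> u" "q \<in> M" "inf q x \<le> v" unfolding memG by blast
      have "inf p q \<in> M" using pq Mf unfolding is_filt_def by blast
      moreover have "inf (inf p q) x \<le> inf u v" using pq
        by (meson inf_le1 inf_le2 inf_mono le_inf_iff order_trans)
      ultimately show "inf u v \<in> G" unfolding memG by blast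
    qed
    moreover have "M \<subseteq> G" unfolding G_def using inf_le1 by blast
    moreover have "G \<inter> I = {}" using nex unfolding G_def
      using I unfolding is_idl_def by blast
    ultimately have "G \<in> \<A>" using FM unfolding \<A>_def by blast
    moreover have "x \<in> G" unfolding G_def using Mf unfolding is_filt_def by auto
    ultimately show False using max \<open>M \<subseteq> G\<close> that by blast
  qed
  have "prime_filter M"
    unfolding prime_filter_def
  proof (intro conjI allI impI ballI)
    show "top \<in> M" using Mf unfolding is_filt_def by blast
    show "bot \<notin> M" using MI I unfolding is_idl_def by blast
    show "\<And>x y. x \<in> M \<Longrightarrow> x \<le> y \<Longrightarrow> y \<in> M" using Mf unfolding is_filt_def by blast
    show "\<And>x y. x \<in> M \<Longrightarrow> y \<in> M \<Longrightarrow> inf x y \<in> M" using Mf unfolding is_filt_def by blast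
  next
    fix x y assume sxy: "sup x y \<in> M"
    show "x \<in> M \<or> y \<in> M"
    proof (rule ccontr)
      assume "\<not> (x \<in> M \<or> y \<in> M)"
      then obtain p i q j where pi: "p \<in> M" "i \<in> I" "inf p x \<le> i" and qj: "q \<in> M" "j \<in> I" "inf q y \<le> j"
        using ext by meson
      define r where "r = inf (inf p q) (sup x y)"
      have rM: "r \<in> M" unfolding r_def using pi qj sxy Mf unfolding is_filt_def by blast
      have "r = sup (inf r x) (inf r y)" unfolding r_def
        by (simp add: inf_sup_distrib1[symmetric] inf.absorb1)
      also have "\<dots> \<le> sup i j"
      proof (rule sup_mono)
        have rp: "r \<le> p" unfolding r_def by (meson inf_le1 inf_le2 order_trans)
        show "inf r x \<le> i" by (meson inf_mono order_refl order_trans pi(3) rp)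
        have rq: "r \<le> q" unfolding r_def by (meson inf_le1 inf_le2 order_trans)
        show "inf r y \<le> j" by (meson inf_mono order_refl order_trans qj(3) rq)
      qed
      finally have "r \<in> I" using I pi(2) qj(2) unfolding is_idl_def by blast
      then show False using rM MI by blast
    qed
  qed
  then show ?thesis using FM MI by blast
qed

lemma PX_mem: "P \<in> PX \<longleftrightarrow> prime_filter P" unfolding PX_def by simp

lemma pf_top: "P \<in> PX \<Longrightarrow> top \<in> P" unfolding PX_def prime_filter_def by blast
lemma pf_bot: "P \<in> PX \<Longrightarrow> bot \<notin> P" unfolding PX_def prime_filter_def by blast
lemma pf_up: "P \<in> PX \<Longrightarrow> x \<in> P \<Longrightarrow> x \<le> y \<Longrightarrow> y \<in> P" unfolding PX_def prime_filter_def by blast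
lemma pf_infc: "P \<in> PX \<Longrightarrow> x \<in> P \<Longrightarrow> y \<in> P \<Longrightarrow> inf x y \<in> P" unfolding PX_def prime_filter_def by blast
lemma pf_prime: "P \<in> PX \<Longrightarrow> sup x y \<in> P \<Longrightarrow> x \<in> P \<or> y \<in> P" unfolding PX_def prime_filter_def by blast
lemma pf_inf: "P \<in> PX \<Longrightarrow> inf x y \<in> P \<longleftrightarrow> x \<in> P \<and> y \<in> P"
  using pf_infc pf_up inf_le1 inf_le2 by metis
lemma pf_sup: "(P::'a::{bounded_lattice,distrib_lattice} set) \<in> PX \<Longrightarrow> sup x y \<in> P \<longleftrightarrow> x \<in> P \<or> y \<in> P"
  using pf_prime pf_up sup_ge1 sup_ge2 by metis

lemma sX_sub: "sX a \<subseteq> PX" unfolding sX_def by blast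
lemma sX_mem: "x \<in> sX a \<longleftrightarrow> x \<in> PX \<and> a \<in> x" unfolding sX_def by blast
lemma sX_inf: "sX (inf a b) = sX a \<inter> sX b" unfolding sX_def by (auto simp: pf_inf)
lemma sX_sup: "sX (sup (a::'a::{bounded_lattice,distrib_lattice}) b) = sX a \<union> sX b" unfolding sX_def by (auto simp: pf_sup)
lemma sX_top: "sX top = PX" unfolding sX_def by (auto simp: pf_top)
lemma sX_bot: "sX bot = {}" unfolding sX_def by (auto simp: pf_bot)
lemma sX_mono: "a \<le> b \<Longrightarrow> sX a \<subseteq> sX b" unfolding sX_def by (auto intro: pf_up)
lemma sX_upset: "x \<in> sX a \<Longrightarrow> y \<in> PX \<Longrightarrow> x \<subseteq> y \<Longrightarrow> y \<in> sX a" unfolding sX_def by blast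

lemma sep:
  fixes a b :: "'a::{bounded_lattice,distrib_lattice}"
  assumes "\<not> a \<le> b" shows "\<exists>P\<in>PX. a \<in> P \<and> b \<notin> P"
proof -
  have F: "is_filt {x. a \<le> x}" unfolding is_filt_def by auto
  have I: "is_idl {x. x \<le> b}" unfolding is_idl_def by auto
  have "{x. a \<le> x} \<inter> {x. x \<le> b} = {}" using assms order_trans by blast
  from PFT[OF F I this] obtain P where "prime_filter P" "{x. a \<le> x} \<subseteq> P" "P \<inter> {x. x \<le> b} = {}" by blast
  then show ?thesis unfolding PX_def by blast
qed

lemma sX_le_iff: "sX (a::'a::{bounded_lattice,distrib_lattice}) \<subseteq> sX b \<longleftrightarrow> a \<le> b"
  using sep[of a b] sX_mono[of a b] unfolding sX_def by blast

lemma sX_inj: "sX (a::'a::{bounded_lattice,distrib_lattice}) = sX b \<Longrightarrow> a = b"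
  by (metis sX_le_iff order_refl antisym)

lemma sX_diff_empty: "sX (a::'a::{bounded_lattice,distrib_lattice}) - sX b = {} \<longleftrightarrow> a \<le> b"
  using sX_le_iff by blast

lemma topspace_PT: "topspace (priestley_top::'a::{bounded_lattice,distrib_lattice} set topology) = PX"
proof -
  have "\<Union>{sX a - sX b |a b. True} = (PX::'a set set)"
  proof
    show "\<Union>{sX a - sX b |a b. True} \<subseteq> (PX::'a set set)" using sX_sub by blast
    show "(PX::'a set set) \<subseteq> \<Union>{sX a - sX b |a b. True}"
    proof
      fix x :: "'a set" assume "x \<in> PX"
      then have "x \<in> sX top - sX bot" by (simp add: sX_top sX_bot)
      then show "x \<in> \<Union>{sX a - sX b |a b. True}" by blast
    qed
  qed
  then show ?thesis unfolding priestley_top_def by simp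
qed

lemma openin_PT:
  "openin (priestley_top::'a::{bounded_lattice,distrib_lattice} set topology) W \<longleftrightarrow>
     W \<subseteq> PX \<and> (\<forall>x\<in>W. \<exists>a b. x \<in> sX a - sX b \<and> sX a - sX b \<subseteq> W)"
proof
  assume "openin (priestley_top::'a set topology) W"
  then have g: "generate_topology_on {sX a - sX b |(a::'a) b. True} W"
    unfolding priestley_top_def by (rule openin_topology_generated_by)
  have "\<forall>x\<in>W. \<exists>a b. x \<in> sX a - sX b \<and> sX a - sX b \<subseteq> W" using g
  proof induction
    case Empty then show ?case by simp
  next
    case (Int U V)
    show ?case
    proof
      fix x assume x: "x \<in> U \<inter> V"
      obtain a1 b1 where 1: "x \<in> sX a1 - sX b1" "sX a1 - sX b1 \<subseteq> U" using Int.IH(1) x by blast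
      obtain a2 b2 where 2: "x \<in> sX a2 - sX b2" "sX a2 - sX b2 \<subseteq> V" using Int.IH(2) x by blast
      have e: "sX (inf a1 a2) - sX (sup b1 b2) = (sX a1 - sX b1) \<inter> (sX a2 - sX b2)"
        by (auto simp: sX_inf sX_sup)
      show "\<exists>a b. x \<in> sX a - sX b \<and> sX a - sX b \<subseteq> U \<inter> V"
        by (rule exI[of _ "inf a1 a2"], rule exI[of _ "sup b1 b2"]) (use 1 2 e in blast)
    qed
  next
    case (UN K) then show ?case by (meson UnionE Union_upper order_trans)
  next
    case (Basis s) then show ?case by blast
  qed
  moreover have "W \<subseteq> PX"
    using \<open>openin priestley_top W\<close> openin_subset topspace_PT by blast
  ultimately show "W \<subseteq> PX \<and> (\<forall>x\<in>W. \<exists>a b. x \<in> sX a - sX b \<and> sX a - sX b \<subseteq> W)" by blast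
next
  assume H: "W \<subseteq> PX \<and> (\<forall>x\<in>W. \<exists>a b. x \<in> sX a - sX b \<and> sX a - sX b \<subseteq> W)"
  have "W = \<Union>{sX a - sX b |a b. sX a - sX b \<subseteq> W}" using H by blast
  moreover have "generate_topology_on {sX a - sX b |(a::'a) b. True} (\<Union>{sX a - sX b |a b. sX a - sX b \<subseteq> W})"
    by (rule generate_topology_on.UN) (auto intro: generate_topology_on.Basis)
  ultimately show "openin priestley_top W"
    unfolding priestley_top_def openin_topology_generated_by_iff by simp
qed

lemma open_basic: "openin priestley_top (sX (a::'a::{bounded_lattice,distrib_lattice}) - sX b)"
  unfolding openin_PT using sX_sub by blast

lemma open_sX: "openin priestley_top (sX (a::'a::{bounded_lattice,distrib_lattice}))"
  using open_basic[of a bot] by (simp add: sX_bot)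

lemma open_cosX: "openin priestley_top (PX - sX (a::'a::{bounded_lattice,distrib_lattice}))"
  using open_basic[of top a] by (simp add: sX_top)

lemma closed_sX: "closedin priestley_top (sX (a::'a::{bounded_lattice,distrib_lattice}))"
  unfolding closedin_def topspace_PT using open_cosX sX_sub by blast

lemma closed_cosX: "closedin priestley_top (PX - sX (a::'a::{bounded_lattice,distrib_lattice}))"
  unfolding closedin_def topspace_PT using open_sX sX_sub
  by (metis Diff_Diff_Int Diff_subset inf.absorb_iff2)

lemma closed_basic: "closedin priestley_top (sX (a::'a::{bounded_lattice,distrib_lattice}) - sX b)"
proof -
  have "sX a - sX b = sX a \<inter> (PX - sX b)" using sX_sub by blast
  then show ?thesis using closedin_Int closed_sX closed_cosX by metis
qed

inductive_set fgen :: "'a::{bounded_lattice,distrib_lattice} set \<Rightarrow> 'a set" for B where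
  ftop: "top \<in> fgen B"
| fbase: "b \<in> B \<Longrightarrow> b \<in> fgen B"
| finf: "x \<in> fgen B \<Longrightarrow> y \<in> fgen B \<Longrightarrow> inf x y \<in> fgen B"
| fup: "x \<in> fgen B \<Longrightarrow> x \<le> y \<Longrightarrow> y \<in> fgen B"

inductive_set igen :: "'a::{bounded_lattice,distrib_lattice} set \<Rightarrow> 'a set" for A where
  ibot: "bot \<in> igen A"
| ibase: "a \<in> A \<Longrightarrow> a \<in> igen A"
| isup: "x \<in> igen A \<Longrightarrow> y \<in> igen A \<Longrightarrow> sup x y \<in> igen A"
| idown: "x \<in> igen A \<Longrightarrow> y \<le> x \<Longrightarrow> y \<in> igen A"

lemma fgen_filt: "is_filt (fgen B)"
  unfolding is_filt_def using fgen.ftop fgen.finf fgen.fup by blast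

lemma igen_idl: "is_idl (igen A)"
  unfolding is_idl_def using igen.ibot igen.isup igen.idown by blast

lemma fgen_cover:
  fixes B :: "'a::{bounded_lattice,distrib_lattice} set"
  assumes "z \<in> fgen B"
  shows "\<exists>B'. finite B' \<and> B' \<subseteq> B \<and> PX \<inter> \<Inter>(sX ` B') \<subseteq> sX z"
  using assms
proof induction
  case ftop then show ?case by (intro exI[of _ "{}"]) (simp add: sX_top)
next
  case (fbase b) then show ?case by (intro exI[of _ "{b}"]) auto
next
  case (finf x y)
  then obtain B1 B2 where "finite B1" "B1 \<subseteq> B" "PX \<inter> \<Inter>(sX ` B1) \<subseteq> sX x"
    "finite B2" "B2 \<subseteq> B" "PX \<inter> \<Inter>(sX ` B2) \<subseteq> sX y" by blast
  then show ?case by (intro exI[of _ "B1 \<union> B2"]) (auto simp: sX_inf)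
next
  case (fup x y)
  then show ?case using sX_mono[of x y] by blast
qed

lemma igen_cover:
  fixes A :: "'a::{bounded_lattice,distrib_lattice} set"
  assumes "z \<in> igen A"
  shows "\<exists>A'. finite A' \<and> A' \<subseteq> A \<and> sX z \<subseteq> \<Union>(sX ` A')"
  using assms
proof induction
  case ibot then show ?case by (intro exI[of _ "{}"]) (simp add: sX_bot)
next
  case (ibase a) then show ?case by (intro exI[of _ "{a}"]) auto
next
  case (isup x y)
  then obtain A1 A2 where "finite A1" "A1 \<subseteq> A" "sX x \<subseteq> \<Union>(sX ` A1)"
    "finite A2" "A2 \<subseteq> A" "sX y \<subseteq> \<Union>(sX ` A2)" by blast
  then show ?case by (intro exI[of _ "A1 \<union> A2"]) (auto simp: sX_sup)
next
  case (idown x y)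
  then show ?case using sX_mono[of y x] by blast
qed

lemma compact_PT: "compact_space (priestley_top::'a::{bounded_lattice,distrib_lattice} set topology)"
  unfolding compact_space_alt topspace_PT
proof (intro allI impI)
  fix \<U> :: "'a set set set"
  assume U: "(\<forall>U\<in>\<U>. openin priestley_top U) \<and> PX \<subseteq> \<Union>\<U>"
  show "\<exists>\<F>. finite \<F> \<and> \<F> \<subseteq> \<U> \<and> PX \<subseteq> \<Union>\<F>"
  proof (rule ccontr)
    assume nofin: "\<not> ?thesis"
    define \<A> where "\<A> = {M. \<U> \<subseteq> M \<and> (\<forall>u\<in>M. openin priestley_top u) \<and>
                      (\<forall>F. finite F \<and> F \<subseteq> M \<longrightarrow> \<not> PX \<subseteq> \<Union>F)}"
    have "\<U> \<in> \<A>" unfolding \<A>_def mem_Collect_eq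
    proof (intro conjI subset_refl allI impI)
      show "\<forall>u\<in>\<U>. openin priestley_top u" using U by (rule conjunct1)
      fix F assume "finite F \<and> F \<subseteq> \<U>"
      then show "\<not> PX \<subseteq> \<Union>F" using nofin by auto
    qed
    then have "\<A> \<noteq> {}" by blast
    moreover have ch: "\<Union>\<C> \<in> \<A>" if C: "\<C> \<noteq> {}" "subset.chain \<A> \<C>" for \<C>
    proof -
      have sub: "\<C> \<subseteq> \<A>" using C(2) unfolding subset.chain_def by auto
      obtain G0 where G0: "G0 \<in> \<C>" using C(1) by blast
      have G0A: "G0 \<in> \<A>" using G0 sub by blast
      have m1: "\<U> \<subseteq> \<Union>\<C>"
      proof -
        have "\<U> \<subseteq> G0" using G0A unfolding \<A>_def by simp
        then show ?thesis using G0 by blast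
      qed
      have m2: "\<forall>u\<in>\<Union>\<C>. openin priestley_top u"
      proof
        fix u assume "u \<in> \<Union>\<C>"
        then obtain X where X: "X \<in> \<C>" "u \<in> X" by blast
        then have "X \<in> \<A>" using sub by blast
        then show "openin priestley_top u" using X(2) unfolding \<A>_def by simp
      qed
      have m3: "\<not> PX \<subseteq> \<Union>F" if F: "finite F" "F \<subseteq> \<Union>\<C>" for F
      proof (cases "F = {}")
        case True
        have "\<forall>F. finite F \<and> F \<subseteq> G0 \<longrightarrow> \<not> PX \<subseteq> \<Union>F" using G0A unfolding \<A>_def by simp
        then show ?thesis using True F(1) by blast
      next
        case False
        obtain B where B: "B \<in> \<C>" "F \<subseteq> B" using finite_subset_Union_chain[OF F(1) F(2) C(1) C(2)] by blast
        then have "B \<in> \<A>" using sub by blast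
        then show ?thesis using F(1) B(2) unfolding \<A>_def by simp
      qed
      show ?thesis unfolding \<A>_def mem_Collect_eq using m1 m2 m3 by simp
    qed
    ultimately have "\<exists>M\<in>\<A>. \<forall>X\<in>\<A>. M \<subseteq> X \<longrightarrow> X = M"
      by (intro subset_Zorn_nonempty) auto
    then obtain M where M: "M \<in> \<A>" and max: "\<And>X. X \<in> \<A> \<Longrightarrow> M \<subseteq> X \<Longrightarrow> X = M"
      by blast
    have UM: "\<U> \<subseteq> M" and Mo: "\<And>u. u \<in> M \<Longrightarrow> openin priestley_top u"
      and Mnf: "\<And>F. finite F \<Longrightarrow> F \<subseteq> M \<Longrightarrow> \<not> PX \<subseteq> \<Union>F"
      using M unfolding \<A>_def by auto
    have notin: "\<exists>F. finite F \<and> F \<subseteq> M \<and> PX \<subseteq> u \<union> \<Union>F"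
      if uo: "openin priestley_top u" and un: "u \<notin> M" for u
    proof -
      have "insert u M \<notin> \<A>" using max un by blast
      then have "\<not> (\<forall>F. finite F \<and> F \<subseteq> insert u M \<longrightarrow> \<not> PX \<subseteq> \<Union>F)"
        using UM Mo uo unfolding \<A>_def by auto
      then obtain F where F: "finite F" "F \<subseteq> insert u M" "PX \<subseteq> \<Union>F"
        by blast
      then show ?thesis by (intro exI[of _ "F - {u}"]) auto
    qed
    have down: "v \<in> M" if dv: "m \<in> M" "v \<subseteq> m" "openin priestley_top v" for m v
    proof (rule ccontr)
      assume vn: "v \<notin> M"
      obtain F where F: "finite F" "F \<subseteq> M" "PX \<subseteq> v \<union> \<Union>F" using notin[OF dv(3) vn] by blast
      have "finite (insert m F)" using F(1) by simp
      moreover have "insert m F \<subseteq> M" using F(2) dv(1) by simp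
      moreover have "PX \<subseteq> \<Union>(insert m F)" using F(3) dv(2) by blast
      ultimately show False using Mnf by blast
    qed
    have split: "u \<in> M \<or> v \<in> M" if sp: "u \<inter> v \<in> M" "openin priestley_top u" "openin priestley_top v" for u v
    proof (rule ccontr)
      assume "\<not> (u \<in> M \<or> v \<in> M)"
      then have un: "u \<notin> M" and vn: "v \<notin> M" by auto
      obtain F1 where F1: "finite F1" "F1 \<subseteq> M" "PX \<subseteq> u \<union> \<Union>F1" using notin[OF sp(2) un] by blast
      obtain F2 where F2: "finite F2" "F2 \<subseteq> M" "PX \<subseteq> v \<union> \<Union>F2" using notin[OF sp(3) vn] by blast
      have "finite (insert (u \<inter> v) (F1 \<union> F2))" using F1(1) F2(1) by simp
      moreover have "insert (u \<inter> v) (F1 \<union> F2) \<subseteq> M" using F1(2) F2(2) sp(1) by simp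
      moreover have "PX \<subseteq> \<Union>(insert (u \<inter> v) (F1 \<union> F2))" using F1(3) F2(3) by blast
      ultimately show False using Mnf by blast
    qed
    define A0 where "A0 = {a. sX a \<in> M}"
    define B0 where "B0 = {b. PX - sX b \<in> M}"
    have cov: "(\<exists>a\<in>A0. a \<in> x) \<or> (\<exists>b\<in>B0. b \<notin> x)" if x: "x \<in> PX" for x
    proof -
      obtain m where m: "m \<in> M" "x \<in> m" using x U UM by blast
      have "openin priestley_top m" using Mo m(1) by blast
      then have "\<forall>y\<in>m. \<exists>a b. y \<in> sX a - sX b \<and> sX a - sX b \<subseteq> m" unfolding openin_PT by blast
      then obtain a b where ab: "x \<in> sX a - sX b" "sX a - sX b \<subseteq> m" using m(2) by blast
      have "sX a - sX b \<in> M" using down[OF m(1) ab(2) open_basic] .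
      moreover have "sX a - sX b = sX a \<inter> (PX - sX b)" using sX_sub by blast
      ultimately have "sX a \<inter> (PX - sX b) \<in> M" by simp
      then have "sX a \<in> M \<or> PX - sX b \<in> M" using split[OF _ open_sX open_cosX] by blast
      moreover have "a \<in> x" "b \<notin> x" using ab(1) unfolding sX_def by auto
      ultimately show ?thesis unfolding A0_def B0_def by blast
    qed
    show False
    proof (cases "fgen B0 \<inter> igen A0 = {}")
      case True
      from PFT[OF fgen_filt igen_idl True] obtain P where P: "prime_filter P" "fgen B0 \<subseteq> P" "P \<inter> igen A0 = {}"
        by blast
      have PP: "P \<in> PX" using P(1) unfolding PX_def by simp
      have "B0 \<subseteq> P" using P(2) fgen.fbase by blast
      moreover have "P \<inter> A0 = {}" using P(3) igen.ibase by blast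
      moreover note cov[OF PP]
      ultimately show False by blast
    next
      case False
      then obtain z where z: "z \<in> fgen B0" "z \<in> igen A0" by blast
      obtain B' where B': "finite B'" "B' \<subseteq> B0" "PX \<inter> \<Inter>(sX ` B') \<subseteq> sX z" using fgen_cover[OF z(1)] by blast
      obtain A' where A': "finite A'" "A' \<subseteq> A0" "sX z \<subseteq> \<Union>(sX ` A')" using igen_cover[OF z(2)] by blast
      define F where "F = sX ` A' \<union> (\<lambda>b. PX - sX b) ` B'"
      have "finite F" using A'(1) B'(1) unfolding F_def by simp
      moreover have "F \<subseteq> M" using A'(2) B'(2) unfolding F_def A0_def B0_def by auto
      moreover have "PX \<subseteq> \<Union>F"
      proof
        fix x :: "'a set" assume x: "x \<in> PX"
        show "x \<in> \<Union>F"
        proof (cases "\<forall>b\<in>B'. x \<in> sX b")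
          case True
          then have "x \<in> sX z" using x B'(3) by blast
          then obtain a where "a \<in> A'" "x \<in> sX a" using A'(3) by blast
          then show ?thesis unfolding F_def by blast
        next
          case False
          then obtain b where "b \<in> B'" "x \<notin> sX b" by blast
          then show ?thesis using x unfolding F_def by blast
        qed
      qed
      ultimately show False using Mnf by blast
    qed
  qed
qed

lemma fin_meet:
  fixes A :: "'a::{bounded_lattice,distrib_lattice} set"
  assumes "finite A" shows "\<exists>m. sX m = PX \<inter> \<Inter>(sX ` A)"
  using assms
proof induction
  case empty then show ?case by (intro exI[of _ top]) (simp add: sX_top)
next
  case (insert a A)
  then obtain m where "sX m = PX \<inter> \<Inter>(sX ` A)" by blast
  then have "sX (inf a m) = PX \<inter> \<Inter>(sX ` insert a A)" using sX_sub[of a] by (auto simp: sX_inf)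
  then show ?case by blast
qed

lemma fin_join:
  fixes A :: "'a::{bounded_lattice,distrib_lattice} set"
  assumes "finite A" shows "\<exists>m. sX m = \<Union>(sX ` A)"
  using assms
proof induction
  case empty then show ?case by (intro exI[of _ bot]) (simp add: sX_bot)
next
  case (insert a A)
  then obtain m where "sX m = \<Union>(sX ` A)" by blast
  then have "sX (sup a m) = \<Union>(sX ` insert a A)" by (auto simp: sX_sup)
  then show ?case by blast
qed

lemma compactin_closed: "closedin priestley_top (C::'a::{bounded_lattice,distrib_lattice} set set) \<Longrightarrow> compactin priestley_top C"
  using closedin_compact_space compact_PT by blast

lemma closed_subPX: "closedin priestley_top (C::'a::{bounded_lattice,distrib_lattice} set set) \<Longrightarrow> C \<subseteq> PX"
  using closedin_subset topspace_PT by metis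

lemma open_subPX: "openin priestley_top (C::'a::{bounded_lattice,distrib_lattice} set set) \<Longrightarrow> C \<subseteq> PX"
  using openin_subset topspace_PT by metis

lemma compact_cover:
  fixes C :: "'a::{bounded_lattice,distrib_lattice} set set"
  assumes "closedin priestley_top C" "\<forall>U\<in>\<U>. openin priestley_top U" "C \<subseteq> \<Union>\<U>"
  shows "\<exists>F. finite F \<and> F \<subseteq> \<U> \<and> C \<subseteq> \<Union>F"
proof -
  have "compactin priestley_top C" using compactin_closed[OF assms(1)] .
  then have "\<forall>\<U>. (\<forall>U\<in>\<U>. openin priestley_top U) \<and> C \<subseteq> \<Union>\<U> \<longrightarrow> (\<exists>F. finite F \<and> F \<subseteq> \<U> \<and> C \<subseteq> \<Union>F)"
    unfolding compactin_def by (rule conjunct2)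
  then show ?thesis using assms(2,3) by blast
qed

lemma closed_compl:
  fixes W :: "'a::{bounded_lattice,distrib_lattice} set set"
  assumes "openin priestley_top W" shows "closedin priestley_top (PX - W)"
proof -
  have "W \<subseteq> PX" using open_subPX[OF assms] .
  then have "PX - (PX - W) = W" by blast
  then show ?thesis unfolding closedin_def topspace_PT using assms by simp
qed

lemma open_compl:
  fixes W :: "'a::{bounded_lattice,distrib_lattice} set set"
  assumes "closedin priestley_top W" shows "openin priestley_top (PX - W)"
  using assms unfolding closedin_def topspace_PT by simp

lemma sep_down:
  fixes C :: "'a::{bounded_lattice,distrib_lattice} set set"
  assumes C: "closedin priestley_top C" and y: "y \<in> PX" "y \<notin> downX C"
  shows "\<exists>m. y \<in> sX m \<and> sX m \<inter> C = {}"
proof -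
  have CP: "C \<subseteq> PX" using closed_subPX[OF C] .
  have cov: "C \<subseteq> \<Union>((\<lambda>a. PX - sX a) ` y)"
  proof
    fix c assume c: "c \<in> C"
    then have "\<not> y \<subseteq> c" using y CP unfolding downX_def by blast
    then obtain a where "a \<in> y" "a \<notin> c" by blast
    then show "c \<in> \<Union>((\<lambda>a. PX - sX a) ` y)" using c CP unfolding sX_def by blast
  qed
  have "\<forall>U\<in>(\<lambda>a. PX - sX a) ` y. openin priestley_top U" using open_cosX by blast
  then obtain F where F: "finite F" "F \<subseteq> (\<lambda>a. PX - sX a) ` y" "C \<subseteq> \<Union>F"
    using compact_cover[OF C _ cov] by blast
  obtain A where A: "A \<subseteq> y" "finite A" "F = (\<lambda>a. PX - sX a) ` A"
    using finite_subset_image[OF F(1) F(2)] by blast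
  obtain m where m: "sX m = PX \<inter> \<Inter>(sX ` A)" using fin_meet[OF A(2)] by blast
  have "y \<in> sX m" unfolding m using y(1) A(1) unfolding sX_def by blast
  moreover have "sX m \<inter> C = {}" using F(3) unfolding m A(3) by blast
  ultimately show ?thesis by blast
qed

lemma sep_up:
  fixes C :: "'a::{bounded_lattice,distrib_lattice} set set"
  assumes C: "closedin priestley_top C" and y: "y \<in> PX" "y \<notin> upX C"
  shows "\<exists>m. C \<subseteq> sX m \<and> y \<notin> sX m"
proof -
  have CP: "C \<subseteq> PX" using closed_subPX[OF C] .
  have cov: "C \<subseteq> \<Union>(sX ` (- y))"
  proof
    fix c assume c: "c \<in> C"
    then have "\<not> c \<subseteq> y" using y CP unfolding upX_def by blast
    then obtain b where "b \<in> c" "b \<notin> y" by blast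
    then show "c \<in> \<Union>(sX ` (- y))" using c CP unfolding sX_def by blast
  qed
  have "\<forall>U\<in>sX ` (- y). openin priestley_top U" using open_sX by blast
  then obtain F where F: "finite F" "F \<subseteq> sX ` (- y)" "C \<subseteq> \<Union>F"
    using compact_cover[OF C _ cov] by blast
  obtain B where B: "B \<subseteq> - y" "finite B" "F = sX ` B"
    using finite_subset_image[OF F(1) F(2)] by blast
  obtain m where m: "sX m = \<Union>(sX ` B)" using fin_join[OF B(2)] by blast
  have "y \<notin> sX m" unfolding m using B(1) unfolding sX_def by blast
  moreover have "C \<subseteq> sX m" using F(3) unfolding m B(3) .
  ultimately show ?thesis by blast
qed

lemma closed_downX:
  fixes C :: "'a::{bounded_lattice,distrib_lattice} set set"
  assumes C: "closedin priestley_top C" shows "closedin priestley_top (downX C)"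
proof -
  have "openin priestley_top (PX - downX C)"
    unfolding openin_subopen[of _ "PX - downX C"]
  proof
    fix y assume y: "y \<in> PX - downX C"
    then obtain m where m: "y \<in> sX m" "sX m \<inter> C = {}" using sep_down[OF C] by blast
    have "sX m \<subseteq> PX - downX C"
    proof
      fix z assume z: "z \<in> sX m"
      have "z \<notin> downX C"
      proof
        assume "z \<in> downX C"
        then obtain c where c: "c \<in> C" "z \<subseteq> c" unfolding downX_def by blast
        then have "c \<in> sX m" using sX_upset[OF z] closed_subPX[OF C] by blast
        then show False using m(2) c(1) by blast
      qed
      then show "z \<in> PX - downX C" using z sX_sub by blast
    qed
    then show "\<exists>T. openin priestley_top T \<and> y \<in> T \<and> T \<subseteq> PX - downX C" using m(1) open_sX by blast
  qed
  moreover have "downX C \<subseteq> PX" unfolding downX_def by blast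
  ultimately show ?thesis unfolding closedin_def topspace_PT by simp
qed

lemma closed_upX:
  fixes C :: "'a::{bounded_lattice,distrib_lattice} set set"
  assumes C: "closedin priestley_top C" shows "closedin priestley_top (upX C)"
proof -
  have "openin priestley_top (PX - upX C)"
    unfolding openin_subopen[of _ "PX - upX C"]
  proof
    fix y assume y: "y \<in> PX - upX C"
    then obtain m where m: "C \<subseteq> sX m" "y \<notin> sX m" using sep_up[OF C] by blast
    have "PX - sX m \<subseteq> PX - upX C"
    proof
      fix z assume z: "z \<in> PX - sX m"
      have "z \<notin> upX C"
      proof
        assume "z \<in> upX C"
        then obtain c where c: "c \<in> C" "c \<subseteq> z" unfolding upX_def by blast
        then have "z \<in> sX m" using sX_upset[of c m z] m(1) z by blast
        then show False using z by blast
      qed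
      then show "z \<in> PX - upX C" using z by blast
    qed
    then show "\<exists>T. openin priestley_top T \<and> y \<in> T \<and> T \<subseteq> PX - upX C" using m(2) y open_cosX by blast
  qed
  moreover have "upX C \<subseteq> PX" unfolding upX_def by blast
  ultimately show ?thesis unfolding closedin_def topspace_PT by simp
qed

lemma upsetD: "is_upsetX W \<Longrightarrow> x \<in> W \<Longrightarrow> y \<in> PX \<Longrightarrow> x \<subseteq> y \<Longrightarrow> y \<in> W"
  unfolding is_upsetX_def by blast

lemma upset_sub: "is_upsetX W \<Longrightarrow> W \<subseteq> PX"
  unfolding is_upsetX_def by blast

lemma open_upset_cover:
  fixes W :: "'a::{bounded_lattice,distrib_lattice} set set"
  assumes W: "openin priestley_top W" "is_upsetX W" and x: "x \<in> W"
  shows "\<exists>m. x \<in> sX m \<and> sX m \<subseteq> W"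
proof -
  have C: "closedin priestley_top (PX - W)" using closed_compl[OF W(1)] .
  have xP: "x \<in> PX" using x open_subPX[OF W(1)] by blast
  have "x \<notin> downX (PX - W)"
  proof
    assume "x \<in> downX (PX - W)"
    then obtain c where c: "c \<in> PX - W" "x \<subseteq> c" unfolding downX_def by blast
    have "c \<in> W" using upsetD[OF W(2) x, of c] c by blast
    then show False using c by blast
  qed
  then obtain m where m: "x \<in> sX m" "sX m \<inter> (PX - W) = {}" using sep_down[OF C xP] by blast
  then show ?thesis using sX_sub by blast
qed

lemma clopen_upset_sX:
  fixes W :: "'a::{bounded_lattice,distrib_lattice} set set"
  assumes W: "openin priestley_top W" "closedin priestley_top W" "is_upsetX W"
  shows "\<exists>a. W = sX a"
proof -
  define \<U> where "\<U> = sX ` {m. sX m \<subseteq> W}"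
  have cov: "W \<subseteq> \<Union>\<U>"
  proof
    fix x assume "x \<in> W"
    then obtain m where m: "x \<in> sX m" "sX m \<subseteq> W" using open_upset_cover[OF W(1) W(3)] by blast
    then have "sX m \<in> \<U>" unfolding \<U>_def by simp
    then show "x \<in> \<Union>\<U>" using m(1) by (rule UnionI)
  qed
  have "\<forall>U\<in>\<U>. openin priestley_top U"
  proof
    fix U assume "U \<in> \<U>"
    then obtain m where "U = sX m" unfolding \<U>_def by blast
    then show "openin priestley_top U" by (simp add: open_sX)
  qed
  then obtain F where F: "finite F" "F \<subseteq> \<U>" "W \<subseteq> \<Union>F"
    using compact_cover[OF W(2) _ cov] by blast
  have "F \<subseteq> sX ` {m. sX m \<subseteq> W}" using F(2) unfolding \<U>_def .
  from finite_subset_image[OF F(1) this] obtain A where A: "A \<subseteq> {m. sX m \<subseteq> W}" "finite A" "F = sX ` A"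
    by blast
  obtain m where m: "sX m = \<Union>(sX ` A)" using fin_join[OF A(2)] by blast
  have "W \<subseteq> sX m" unfolding m using F(3) unfolding A(3) .
  moreover have "sX m \<subseteq> W" unfolding m
  proof (rule Union_least)
    fix X assume "X \<in> sX ` A"
    then show "X \<subseteq> W" using A(1) by auto
  qed
  ultimately have "W = sX m" by (rule subset_antisym)
  then show ?thesis by blast
qed

lemma clopen_basic_fin:
  fixes U :: "'a::{bounded_lattice,distrib_lattice} set set"
  assumes U: "openin priestley_top U" "closedin priestley_top U"
  shows "\<exists>K. finite K \<and> U = (\<Union>p\<in>K. sX (fst p) - sX (snd p))"
proof -
  define \<U> where "\<U> = {sX a - sX b | a b. sX a - sX b \<subseteq> U}"
  have cov: "U \<subseteq> \<Union>\<U>" using U(1) unfolding openin_PT \<U>_def by blast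
  have "\<forall>V\<in>\<U>. openin priestley_top V" unfolding \<U>_def using open_basic by blast
  then obtain F where F: "finite F" "F \<subseteq> \<U>" "U \<subseteq> \<Union>F"
    using compact_cover[OF U(2) _ cov] by blast
  have "F \<subseteq> (\<lambda>p. sX (fst p) - sX (snd p)) ` {p. sX (fst p) - sX (snd p) \<subseteq> U}"
  proof
    fix V assume "V \<in> F"
    then obtain a b where "V = sX a - sX b" "sX a - sX b \<subseteq> U" using F(2) unfolding \<U>_def by blast
    then show "V \<in> (\<lambda>p. sX (fst p) - sX (snd p)) ` {p. sX (fst p) - sX (snd p) \<subseteq> U}"
      by (intro image_eqI[of _ _ "(a,b)"]) auto
  qed
  from finite_subset_image[OF F(1) this] obtain K where K: "K \<subseteq> {p. sX (fst p) - sX (snd p) \<subseteq> U}" "finite K" "F = (\<lambda>p. sX (fst p) - sX (snd p)) ` K"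
    by blast
  have "U = (\<Union>p\<in>K. sX (fst p) - sX (snd p))" using F(3) K(1) unfolding K(3) by blast
  then show ?thesis using K(2) by blast
qed

definition LX :: "'a::{bounded_lattice,distrib_lattice} set set \<Rightarrow> 'a set" where
  "LX Q = {x. sX x \<subseteq> Q}"

definition USX :: "'a::{bounded_lattice,distrib_lattice} set \<Rightarrow> 'a set set" where
  "USX S = \<Union>(sX ` S)"

lemma LX_mem: "x \<in> LX Q \<longleftrightarrow> sX x \<subseteq> Q" unfolding LX_def by simp

lemma USX_mem: "y \<in> USX S \<longleftrightarrow> (\<exists>c\<in>S. y \<in> sX c)" unfolding USX_def by blast

lemma USX_sub: "USX S \<subseteq> PX" unfolding USX_def using sX_sub by blast

lemma USX_open: "openin priestley_top (USX (S::'a::{bounded_lattice,distrib_lattice} set))"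
  unfolding USX_def by (rule openin_Union) (auto simp: open_sX)

lemma USX_upset: "is_upsetX (USX (S::'a::{bounded_lattice,distrib_lattice} set))"
  unfolding is_upsetX_def
proof (intro conjI ballI impI)
  show "USX S \<subseteq> PX" by (rule USX_sub)
  fix x y assume "x \<in> USX S" "y \<in> PX" "x \<subseteq> y"
  then obtain c where "c \<in> S" "x \<in> sX c" unfolding USX_mem by blast
  then have "y \<in> sX c" using sX_upset \<open>y \<in> PX\<close> \<open>x \<subseteq> y\<close> by blast
  then show "y \<in> USX S" unfolding USX_mem using \<open>c \<in> S\<close> by blast
qed

lemma sX_upsetX: "is_upsetX (sX a)" unfolding is_upsetX_def
proof (intro conjI ballI impI)
  show "sX a \<subseteq> PX" by (rule sX_sub)
  fix x y assume "x \<in> sX a" "y \<in> PX" "x \<subseteq> y"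
  then show "y \<in> sX a" by (rule sX_upset)
qed

lemma USX_LX_sub: "USX (LX Q) \<subseteq> Q" unfolding USX_def LX_def by blast

lemma open_upset_US:
  fixes W :: "'a::{bounded_lattice,distrib_lattice} set set"
  assumes "openin priestley_top W" "is_upsetX W" shows "USX (LX W) = W"
proof
  show "USX (LX W) \<subseteq> W" by (rule USX_LX_sub)
  show "W \<subseteq> USX (LX W)"
  proof
    fix x assume "x \<in> W"
    then obtain m where "x \<in> sX m" "sX m \<subseteq> W" using open_upset_cover[OF assms] by blast
    then have "m \<in> LX W" unfolding LX_mem by simp
    then show "x \<in> USX (LX W)" unfolding USX_mem using \<open>x \<in> sX m\<close> by blast
  qed
qed

lemma LX_inj:
  fixes W1 W2 :: "'a::{bounded_lattice,distrib_lattice} set set"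
  assumes "openin priestley_top W1" "is_upsetX W1" "openin priestley_top W2" "is_upsetX W2"
    and "LX W1 = LX W2"
  shows "W1 = W2"
proof -
  have "W1 = USX (LX W1)" using open_upset_US[OF assms(1,2)] by (rule sym)
  also have "\<dots> = USX (LX W2)" using assms(5) by (rule arg_cong)
  also have "\<dots> = W2" using open_upset_US[OF assms(3,4)] .
  finally show ?thesis .
qed

lemma LX_sX: "LX (sX (a::'a::{bounded_lattice,distrib_lattice})) = {..a}" unfolding LX_def atMost_def by (simp add: sX_le_iff)

lemma LX_PX: "LX (PX::'a::{bounded_lattice,distrib_lattice} set set) = UNIV" unfolding LX_def by (simp add: sX_sub)

lemma LX_Int: "LX (A \<inter> B) = LX A \<inter> LX B" unfolding LX_def by blast

lemma LX_mono: "A \<subseteq> B \<Longrightarrow> LX A \<subseteq> LX B" unfolding LX_def by blast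

lemma int1X_sub_int: "int1X S \<subseteq> priestley_top interior_of S"
proof
  fix x assume x: "x \<in> int1X S"
  then have xP: "x \<in> PX" and nd: "x \<notin> downX (PX - priestley_top interior_of S)" unfolding int1X_def by auto
  show "x \<in> priestley_top interior_of S"
  proof (rule ccontr)
    assume "x \<notin> priestley_top interior_of S"
    then have "x \<in> downX (PX - priestley_top interior_of S)" using xP unfolding downX_def by blast
    then show False using nd by blast
  qed
qed

lemma int1X_sub: "int1X S \<subseteq> S" using int1X_sub_int interior_of_subset by (rule subset_trans)

lemma int1X_subPX: "int1X S \<subseteq> PX" unfolding int1X_def by blast

lemma int1X_mono: "S \<subseteq> T \<Longrightarrow> int1X S \<subseteq> int1X T"
  unfolding int1X_def downX_def using interior_of_mono by blast

lemma int1X_upset: "is_upsetX (int1X S)"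
  unfolding is_upsetX_def int1X_def downX_def by blast

lemma int1X_open: "openin priestley_top (int1X (S::'a::{bounded_lattice,distrib_lattice} set set))"
proof -
  have "closedin priestley_top (PX - priestley_top interior_of S)"
    using closed_compl[OF openin_interior_of] .
  then have "closedin priestley_top (downX (PX - priestley_top interior_of S))" by (rule closed_downX)
  then show ?thesis unfolding int1X_def by (rule open_compl)
qed

lemma int1X_max:
  fixes W :: "'a::{bounded_lattice,distrib_lattice} set set"
  assumes "openin priestley_top W" "is_upsetX W" "W \<subseteq> S" shows "W \<subseteq> int1X S"
proof
  fix x assume x: "x \<in> W"
  have WI: "W \<subseteq> priestley_top interior_of S" using interior_of_maximal[OF assms(3,1)] .
  have "x \<in> PX" using x upset_sub[OF assms(2)] by blast
  moreover have "x \<notin> downX (PX - priestley_top interior_of S)"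
  proof
    assume "x \<in> downX (PX - priestley_top interior_of S)"
    then obtain c where c: "c \<in> PX - priestley_top interior_of S" "x \<subseteq> c" unfolding downX_def by blast
    have "c \<in> W" using upsetD[OF assms(2) x, of c] c by blast
    then show False using c WI by blast
  qed
  ultimately show "x \<in> int1X S" unfolding int1X_def by blast
qed

lemma open_upset_int1X_cl:
  fixes W :: "'a::{bounded_lattice,distrib_lattice} set set"
  assumes "openin priestley_top W" "is_upsetX W" shows "W \<subseteq> int1X (clX W)"
  using int1X_max[OF assms] closure_of_subset[of W priestley_top] upset_sub[OF assms(2)]
  unfolding clX_def topspace_PT by blast

lemma int1X_clX_sub: "int1X (clX V) \<subseteq> clX V" by (rule int1X_sub)

lemma sX_sub_int1X:
  fixes S :: "'a::{bounded_lattice,distrib_lattice} set set"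
  shows "sX a \<subseteq> int1X S \<longleftrightarrow> sX a \<subseteq> S"
  using int1X_max[OF open_sX sX_upsetX, of a S] int1X_sub[of S] by blast

lemma clX_closed: "closedin priestley_top (clX S)" unfolding clX_def by simp

lemma clX_USX: "USX (S::'a::{bounded_lattice,distrib_lattice} set) \<subseteq> clX (USX S)"
  unfolding clX_def using closure_of_subset[of "USX S" priestley_top] USX_sub[of S] topspace_PT[where 'a='a]
  by simp

lemma clX_sub_gen: "(V::'a::{bounded_lattice,distrib_lattice} set set) \<subseteq> PX \<Longrightarrow> V \<subseteq> clX V"
  unfolding clX_def using closure_of_subset[of V priestley_top] topspace_PT[where 'a='a] by simp

lemma DJ_sub:
  fixes S :: "'a::{bounded_lattice,distrib_lattice} set"
  assumes dj: "distributive_join S j" shows "sX j \<subseteq> clX (USX S)"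
proof
  fix y assume y: "y \<in> sX j"
  show "y \<in> clX (USX S)"
  proof (rule ccontr)
    assume ny: "y \<notin> clX (USX S)"
    define T where "T = sX j \<inter> (PX - clX (USX S))"
    have "openin priestley_top T" unfolding T_def
      by (rule openin_Int[OF open_sX open_compl[OF clX_closed]])
    moreover have "y \<in> T" unfolding T_def using y ny sX_sub by blast
    ultimately obtain p q where pq: "y \<in> sX p - sX q" "sX p - sX q \<subseteq> T"
      unfolding openin_PT by blast
    have le: "inf p c \<le> q" if c: "c \<in> S" for c
    proof -
      have "sX (inf p c) \<subseteq> sX q"
      proof
        fix z assume z: "z \<in> sX (inf p c)"
        then have zp: "z \<in> sX p" and zc: "z \<in> sX c" by (auto simp: sX_inf)
        have "z \<in> USX S" unfolding USX_mem using c zc by blast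
        then have "z \<in> clX (USX S)" using clX_USX by blast
        then have "z \<notin> T" unfolding T_def by blast
        then show "z \<in> sX q" using pq(2) zp by blast
      qed
      then show ?thesis using sX_le_iff by blast
    qed
    have "is_join ((\<lambda>s. inf p s) ` S) (inf p j)" using dj unfolding distributive_join_def by blast
    then have "inf p j \<le> q" unfolding is_join_def using le by blast
    then have "sX (inf p j) \<subseteq> sX q" by (rule sX_mono)
    moreover have "y \<in> sX (inf p j)" using pq(1) y by (simp add: sX_inf)
    ultimately show False using pq(1) by blast
  qed
qed

lemma DJ_conv:
  fixes S :: "'a::{bounded_lattice,distrib_lattice} set"
  assumes sx: "sX x \<subseteq> clX (USX S)" shows "distributive_join ((\<lambda>c. inf x c) ` S) x"
proof -
  have G: "inf a x \<le> u" if H: "\<forall>c\<in>S. inf a (inf x c) \<le> u" for a u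
  proof (rule ccontr)
    assume "\<not> inf a x \<le> u"
    then obtain w where w: "w \<in> sX (inf a x) - sX u" using sX_le_iff by blast
    have op: "openin priestley_top (sX (inf a x) - sX u)" by (rule open_basic)
    have "(sX (inf a x) - sX u) \<inter> USX S = {}"
    proof (rule ccontr)
      assume "(sX (inf a x) - sX u) \<inter> USX S \<noteq> {}"
      then obtain z where z0: "z \<in> sX (inf a x) - sX u" "z \<in> USX S" by blast
      then obtain c where c: "c \<in> S" "z \<in> sX c" unfolding USX_mem by blast
      have z: "z \<in> sX (inf a x)" "z \<notin> sX u" "c \<in> S" "z \<in> sX c" using z0 c by auto
      then have "z \<in> sX (inf a (inf x c))" by (simp add: sX_inf)
      moreover have "sX (inf a (inf x c)) \<subseteq> sX u" using H z(3) sX_mono by blast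
      ultimately show False using z(2) by blast
    qed
    then have "(sX (inf a x) - sX u) \<inter> clX (USX S) = {}"
      using openin_Int_closure_of_eq_empty[OF op] unfolding clX_def by blast
    moreover have "w \<in> clX (USX S)" using w sx by (auto simp: sX_inf)
    ultimately show False using w by blast
  qed
  have J: "is_join ((\<lambda>s. inf a s) ` ((\<lambda>c. inf x c) ` S)) (inf a x)" for a
    unfolding is_join_def
  proof (intro conjI allI impI ballI)
    fix s assume "s \<in> (\<lambda>s. inf a s) ` ((\<lambda>c. inf x c) ` S)"
    then obtain c where "s = inf a (inf x c)" by blast
    then show "s \<le> inf a x" by (simp add: inf.coboundedI2 le_infI1)
  next
    fix u assume "\<forall>s\<in>(\<lambda>s. inf a s) ` ((\<lambda>c. inf x c) ` S). s \<le> u"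
    then have "\<forall>c\<in>S. inf a (inf x c) \<le> u" by blast
    then show "inf a x \<le> u" by (rule G)
  qed
  have "is_join ((\<lambda>c. inf x c) ` S) x"
  proof -
    have e: "(\<lambda>s. inf top s) ` ((\<lambda>c. inf x c) ` S) = (\<lambda>c. inf x c) ` S" by (simp add: image_image)
    show ?thesis using J[of top] unfolding e by simp
  qed
  then show ?thesis unfolding distributive_join_def using J by blast
qed

lemma LX_Dideal:
  fixes V :: "'a::{bounded_lattice,distrib_lattice} set set"
  shows "D_ideal (LX (int1X (clX V)))"
  unfolding D_ideal_def
proof (intro conjI allI impI)
  show "is_downset (LX (int1X (clX V)))"
    unfolding is_downset_def
  proof (intro ballI allI impI)
    fix x y assume "x \<in> LX (int1X (clX V))" "y \<le> x"
    then show "y \<in> LX (int1X (clX V))" unfolding LX_mem using sX_mono[of y x] by (rule_tac subset_trans) auto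
  qed
next
  fix S j assume S: "S \<subseteq> LX (int1X (clX V))" and dj: "distributive_join S j"
  have "USX S \<subseteq> clX V"
  proof
    fix y assume "y \<in> USX S"
    then obtain c where "c \<in> S" "y \<in> sX c" unfolding USX_mem by blast
    then have "c \<in> LX (int1X (clX V))" "y \<in> sX c" using S by auto
    then have "y \<in> int1X (clX V)" unfolding LX_mem by (rule subsetD)
    then show "y \<in> clX V" by (rule subsetD[OF int1X_sub])
  qed
  then have "clX (USX S) \<subseteq> clX V" unfolding clX_def
    by (rule closure_of_minimal) simp
  then have "sX j \<subseteq> clX V" using DJ_sub[OF dj] by (rule_tac subset_trans)
  then show "j \<in> LX (int1X (clX V))" unfolding LX_mem sX_sub_int1X .
qed

lemma D_gen_char:
  fixes S :: "'a::{bounded_lattice,distrib_lattice} set"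
  shows "D_gen S = LX (int1X (clX (USX S)))"
proof
  have "S \<subseteq> LX (int1X (clX (USX S)))"
  proof
    fix c assume c: "c \<in> S"
    have "sX c \<subseteq> USX S" unfolding USX_def using c by blast
    also have "\<dots> \<subseteq> int1X (clX (USX S))" by (rule open_upset_int1X_cl[OF USX_open USX_upset])
    finally show "c \<in> LX (int1X (clX (USX S)))" unfolding LX_mem .
  qed
  then show "D_gen S \<subseteq> LX (int1X (clX (USX S)))"
    unfolding D_gen_def using LX_Dideal by blast
next
  show "LX (int1X (clX (USX S))) \<subseteq> D_gen S"
  proof
    fix x assume x: "x \<in> LX (int1X (clX (USX S)))"
    show "x \<in> D_gen S" unfolding D_gen_def
    proof
      fix D assume "D \<in> {D. D_ideal D \<and> S \<subseteq> D}"
      then have D: "D_ideal D" "S \<subseteq> D" by auto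
      have "(\<lambda>c. inf x c) ` S \<subseteq> D"
      proof
        fix t assume "t \<in> (\<lambda>c. inf x c) ` S"
        then obtain c where c: "c \<in> S" "t = inf x c" by blast
        then have "c \<in> D" using D(2) by blast
        then show "t \<in> D" using D(1) c(2) unfolding D_ideal_def is_downset_def by simp
      qed
      moreover have "sX x \<subseteq> clX (USX S)" using x int1X_sub unfolding LX_mem by blast
      then have "distributive_join ((\<lambda>c. inf x c) ` S) x" by (rule DJ_conv)
      ultimately show "x \<in> D" using D(1) unfolding D_ideal_def by blast
    qed
  qed
qed

lemma rel_ann_LX:
  fixes a b :: "'a::{bounded_lattice,distrib_lattice}"
  shows "rel_ann a b = LX (PX - downX (sX a - sX b))"
proof
  show "rel_ann a b \<subseteq> LX (PX - downX (sX a - sX b))"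
  proof
    fix x assume "x \<in> rel_ann a b"
    then have ax: "inf a x \<le> b" unfolding rel_ann_def by simp
    have "sX x \<subseteq> PX - downX (sX a - sX b)"
    proof
      fix z assume z: "z \<in> sX x"
      have "z \<notin> downX (sX a - sX b)"
      proof
        assume "z \<in> downX (sX a - sX b)"
        then obtain c where c: "c \<in> sX a - sX b" "z \<subseteq> c" unfolding downX_def by blast
        have "c \<in> sX x" using sX_upset[OF z _ c(2)] c(1) sX_sub by blast
        then have "c \<in> sX (inf a x)" using c(1) by (simp add: sX_inf)
        then have "c \<in> sX b" using sX_mono[OF ax] by blast
        then show False using c(1) by blast
      qed
      then show "z \<in> PX - downX (sX a - sX b)" using z sX_sub by blast
    qed
    then show "x \<in> LX (PX - downX (sX a - sX b))" unfolding LX_mem .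
  qed
next
  show "LX (PX - downX (sX a - sX b)) \<subseteq> rel_ann a b"
  proof
    fix x assume "x \<in> LX (PX - downX (sX a - sX b))"
    then have sx: "sX x \<subseteq> PX - downX (sX a - sX b)" unfolding LX_mem .
    have "sX (inf a x) \<subseteq> sX b"
    proof
      fix z assume z: "z \<in> sX (inf a x)"
      show "z \<in> sX b"
      proof (rule ccontr)
        assume "z \<notin> sX b"
        then have "z \<in> sX a - sX b" using z by (simp add: sX_inf)
        then have "z \<in> downX (sX a - sX b)" unfolding downX_def using sX_sub by blast
        moreover have "z \<in> sX x" using z by (simp add: sX_inf)
        ultimately show False using sx by blast
      qed
    qed
    then show "x \<in> rel_ann a b" unfolding rel_ann_def using sX_le_iff by blast
  qed
qed

lemma card_fin_less:
  assumes k: "Cinfinite \<kappa>" and A: "finite A" shows "|A| <o \<kappa>"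
proof -
  have "Cfinite |A|" unfolding cfinite_def using A by (simp add: card_of_card_order_on Field_card_of)
  then show ?thesis using Cfinite_ordLess_Cinfinite[OF _ k] by blast
qed

lemma card_image_less: "|A| <o \<kappa> \<Longrightarrow> |f ` A| <o \<kappa>"
  using ordLeq_ordLess_trans[OF card_of_image] by blast

lemma upset_Union: "(\<forall>W\<in>F. is_upsetX W) \<Longrightarrow> is_upsetX (\<Union>F)"
  unfolding is_upsetX_def by blast

lemma kcu_open_upset:
  fixes V :: "'a::{bounded_lattice,distrib_lattice} set set"
  assumes "kappa_clopen_upsetX \<kappa> V"
  shows "openin priestley_top V" "is_upsetX V"
proof -
  obtain F where F: "|F| <o \<kappa>" "\<forall>W\<in>F. clopen_upsetX W" "V = \<Union>F"
    using assms unfolding kappa_clopen_upsetX_def by blast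
  have "\<forall>W\<in>F. openin priestley_top W" using F(2) unfolding clopen_upsetX_def clopenX_def by blast
  then show "openin priestley_top V" unfolding F(3) by (intro openin_Union) blast
  have "\<forall>W\<in>F. is_upsetX W" using F(2) unfolding clopen_upsetX_def by blast
  then show "is_upsetX V" unfolding F(3) by (rule upset_Union)
qed

lemma kcu_USX:
  fixes V :: "'a::{bounded_lattice,distrib_lattice} set set"
  assumes "kappa_clopen_upsetX \<kappa> V"
  shows "\<exists>S. |S| <o \<kappa> \<and> V = USX S"
proof -
  obtain F where F: "|F| <o \<kappa>" "\<forall>W\<in>F. clopen_upsetX W" "V = \<Union>F"
    using assms unfolding kappa_clopen_upsetX_def by blast
  have ex: "\<forall>W\<in>F. \<exists>a. W = sX a"
  proof
    fix W assume "W \<in> F"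
    then have "openin priestley_top W" "closedin priestley_top W" "is_upsetX W"
      using F(2) unfolding clopen_upsetX_def clopenX_def by auto
    then show "\<exists>a. W = sX a" by (rule clopen_upset_sX)
  qed
  define g :: "'a set set \<Rightarrow> 'a" where "g W = (SOME a. W = sX a)" for W
  have g: "W = sX (g W)" if "W \<in> F" for W
    unfolding g_def using ex that by (metis (mono_tags, lifting) someI_ex)
  have "USX (g ` F) = \<Union>F"
  proof
    show "USX (g ` F) \<subseteq> \<Union>F"
    proof
      fix y assume "y \<in> USX (g ` F)"
      then obtain W where "W \<in> F" "y \<in> sX (g W)" unfolding USX_mem by blast
      then show "y \<in> \<Union>F" using g by blast
    qed
    show "\<Union>F \<subseteq> USX (g ` F)"
    proof
      fix y assume "y \<in> \<Union>F"
      then obtain W where W: "W \<in> F" "y \<in> W" by blast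
      then have "y \<in> sX (g W)" using g by blast
      then show "y \<in> USX (g ` F)" unfolding USX_mem using W(1) by blast
    qed
  qed
  moreover have "|g ` F| <o \<kappa>" using card_image_less[OF F(1)] .
  ultimately show ?thesis using F(3) by metis
qed

lemma USX_kcu:
  fixes S :: "'a::{bounded_lattice,distrib_lattice} set"
  assumes "|S| <o \<kappa>" shows "kappa_clopen_upsetX \<kappa> (USX S)"
  unfolding kappa_clopen_upsetX_def
proof (intro exI conjI)
  show "|sX ` S| <o \<kappa>" using card_image_less[OF assms] .
  show "\<forall>V\<in>sX ` S. clopen_upsetX V"
    unfolding clopen_upsetX_def clopenX_def using open_sX closed_sX sX_upsetX by blast
  show "USX S = \<Union>(sX ` S)" unfolding USX_def ..
qed

lemma USX_single: "USX {a} = sX a" unfolding USX_def by simp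

lemma int1X_clX_sX: "int1X (clX (sX (a::'a::{bounded_lattice,distrib_lattice}))) = sX a"
proof -
  have "clX (sX a) = sX a" unfolding clX_def by (rule closure_of_closedin[OF closed_sX])
  moreover have "int1X (sX a) = sX a"
    using int1X_sub[of "sX a"] int1X_max[OF open_sX sX_upsetX subset_refl] by (rule subset_antisym)
  ultimately show ?thesis by simp
qed

lemma meet_eq:
  fixes V1 V2 :: "'a::{bounded_lattice,distrib_lattice} set set"
  assumes o1: "openin priestley_top V1" and o2: "openin priestley_top V2"
  shows "LX (int1X (clX V1)) \<inter> LX (int1X (clX V2)) = LX (int1X (clX (V1 \<inter> V2)))"
proof
  have "int1X (clX (V1 \<inter> V2)) \<subseteq> int1X (clX V1)"
    unfolding clX_def by (intro int1X_mono closure_of_mono) blast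
  moreover have "int1X (clX (V1 \<inter> V2)) \<subseteq> int1X (clX V2)"
    unfolding clX_def by (intro int1X_mono closure_of_mono) blast
  ultimately show "LX (int1X (clX (V1 \<inter> V2))) \<subseteq> LX (int1X (clX V1)) \<inter> LX (int1X (clX V2))"
    using LX_mono by blast
next
  show "LX (int1X (clX V1)) \<inter> LX (int1X (clX V2)) \<subseteq> LX (int1X (clX (V1 \<inter> V2)))"
  proof
    fix x assume "x \<in> LX (int1X (clX V1)) \<inter> LX (int1X (clX V2))"
    then have "sX x \<subseteq> int1X (clX V1)" "sX x \<subseteq> int1X (clX V2)" by (simp_all add: LX_mem)
    then have h1: "sX x \<subseteq> clX V1" and h2: "sX x \<subseteq> clX V2"
      using int1X_sub by (blast intro: subset_trans)+
    define Q where "Q = sX x"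
    have oO: "openin priestley_top Q" unfolding Q_def by (rule open_sX)
    have oOV1: "openin priestley_top (Q \<inter> V1)" using oO o1 by (rule openin_Int)
    have a: "Q \<inter> V1 \<subseteq> clX (Q \<inter> V1 \<inter> V2)"
    proof -
      have "Q \<inter> V1 \<subseteq> (Q \<inter> V1) \<inter> clX V2" using h2 unfolding Q_def by blast
      also have "\<dots> \<subseteq> clX ((Q \<inter> V1) \<inter> V2)" unfolding clX_def by (rule openin_Int_closure_of_subset[OF oOV1])
      finally show ?thesis by (simp add: Int_assoc)
    qed
    have b: "clX (Q \<inter> V1) \<subseteq> clX (Q \<inter> V1 \<inter> V2)"
      using a unfolding clX_def by (rule closure_of_minimal) simp
    have "Q \<subseteq> Q \<inter> clX V1" using h1 unfolding Q_def by blast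
    also have "\<dots> \<subseteq> clX (Q \<inter> V1)" unfolding clX_def by (rule openin_Int_closure_of_subset[OF oO])
    also have "\<dots> \<subseteq> clX (Q \<inter> V1 \<inter> V2)" by (rule b)
    also have "\<dots> \<subseteq> clX (V1 \<inter> V2)" unfolding clX_def by (rule closure_of_mono) blast
    finally have "sX x \<subseteq> clX (V1 \<inter> V2)" unfolding Q_def .
    then show "x \<in> LX (int1X (clX (V1 \<inter> V2)))" unfolding LX_mem sX_sub_int1X .
  qed
qed


lemma BLk_char:
  fixes \<kappa> :: "'k rel"
  assumes k: "Cinfinite \<kappa>" "regularCard \<kappa>" and I: "(I::'a::{bounded_lattice,distrib_lattice} set) \<in> BLk \<kappa>"
  shows "\<exists>V. kappa_clopen_upsetX \<kappa> V \<and> I = LX (int1X (clX V))"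
  using I
proof induction
  case (princ a)
  have "kappa_clopen_upsetX \<kappa> (sX a)"
    using USX_kcu[OF card_fin_less[OF k(1), of "{a}"]] by (simp add: USX_single)
  moreover have "{..a} = LX (int1X (clX (sX a)))" by (simp add: int1X_clX_sX LX_sX)
  ultimately show ?case by blast
next
  case (meet I J)
  obtain V1 where V1: "kappa_clopen_upsetX \<kappa> V1" "I = LX (int1X (clX V1))" using meet.IH(1) by blast
  obtain V2 where V2: "kappa_clopen_upsetX \<kappa> V2" "J = LX (int1X (clX V2))" using meet.IH(2) by blast
  obtain S1 where S1: "|S1| <o \<kappa>" "V1 = USX S1" using kcu_USX[OF V1(1)] by blast
  obtain S2 where S2: "|S2| <o \<kappa>" "V2 = USX S2" using kcu_USX[OF V2(1)] by blast
  define S3 where "S3 = (\<Union>a\<in>S1. (\<lambda>b. inf a b) ` S2)"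
  have cS3: "|S3| <o \<kappa>" unfolding S3_def
    by (rule regularCard_UNION_bound[OF k S1(1)]) (rule card_image_less[OF S2(1)])
  have "USX S3 = V1 \<inter> V2"
  proof
    show "USX S3 \<subseteq> V1 \<inter> V2"
    proof
      fix y assume "y \<in> USX S3"
      then obtain c where c: "c \<in> S3" "y \<in> sX c" unfolding USX_mem by blast
      then obtain a b where ab: "a \<in> S1" "b \<in> S2" "c = inf a b" unfolding S3_def by blast
      then have "y \<in> sX a" "y \<in> sX b" using c(2) by (auto simp: sX_inf)
      then show "y \<in> V1 \<inter> V2" unfolding S1(2) S2(2) using ab by (auto simp: USX_mem)
    qed
    show "V1 \<inter> V2 \<subseteq> USX S3"
    proof
      fix y assume "y \<in> V1 \<inter> V2"
      then obtain a b where ab: "a \<in> S1" "y \<in> sX a" "b \<in> S2" "y \<in> sX b"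
        unfolding S1(2) S2(2) by (auto simp: USX_mem)
      then have "y \<in> sX (inf a b)" by (simp add: sX_inf)
      moreover have "inf a b \<in> S3" unfolding S3_def using ab by blast
      ultimately show "y \<in> USX S3" unfolding USX_mem by blast
    qed
  qed
  then have kc: "kappa_clopen_upsetX \<kappa> (V1 \<inter> V2)" using USX_kcu[OF cS3] by simp
  have "I \<inter> J = LX (int1X (clX (V1 \<inter> V2)))"
    unfolding V1(2) V2(2) by (rule meet_eq[OF kcu_open_upset(1)[OF V1(1)] kcu_open_upset(1)[OF V2(1)]])
  then show ?case using kc by blast
next
  case (join F)
  have ex: "\<forall>I\<in>F. \<exists>S. |S| <o \<kappa> \<and> I = LX (int1X (clX (USX S)))"
  proof
    fix I assume "I \<in> F"
    then obtain V where V: "kappa_clopen_upsetX \<kappa> V" "I = LX (int1X (clX V))" using join.IH by blast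
    obtain S where "|S| <o \<kappa>" "V = USX S" using kcu_USX[OF V(1)] by blast
    then show "\<exists>S. |S| <o \<kappa> \<and> I = LX (int1X (clX (USX S)))" using V(2) by blast
  qed
  define Sf :: "'a set \<Rightarrow> 'a set" where "Sf I = (SOME S. |S| <o \<kappa> \<and> I = LX (int1X (clX (USX S))))" for I
  have Sf: "|Sf I| <o \<kappa>" "I = LX (int1X (clX (USX (Sf I))))" if "I \<in> F" for I
  proof -
    have "\<exists>S. |S| <o \<kappa> \<and> I = LX (int1X (clX (USX S)))" using ex that by blast
    then have "|Sf I| <o \<kappa> \<and> I = LX (int1X (clX (USX (Sf I))))"
      unfolding Sf_def by (rule someI_ex)
    then show "|Sf I| <o \<kappa>" "I = LX (int1X (clX (USX (Sf I))))" by auto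
  qed
  define S where "S = (\<Union>I\<in>F. Sf I)"
  have cS: "|S| <o \<kappa>" unfolding S_def
    by (rule regularCard_UNION_bound[OF k join.hyps]) (rule Sf(1))
  define W where "W = USX S"
  have WI: "W \<subseteq> USX (\<Union>F)"
  proof
    fix y assume "y \<in> W"
    then obtain c I where cI: "I \<in> F" "c \<in> Sf I" "y \<in> sX c" unfolding W_def USX_mem S_def by blast
    have "sX c \<subseteq> USX (Sf I)" unfolding USX_def using cI(2) by blast
    also have "\<dots> \<subseteq> int1X (clX (USX (Sf I)))" by (rule open_upset_int1X_cl[OF USX_open USX_upset])
    finally have "c \<in> I" using Sf(2)[OF cI(1)] LX_mem by (metis)
    then show "y \<in> USX (\<Union>F)" unfolding USX_mem using cI by blast
  qed
  have IW: "USX (\<Union>F) \<subseteq> clX W"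
  proof
    fix y assume "y \<in> USX (\<Union>F)"
    then obtain c I where cI: "I \<in> F" "c \<in> I" "y \<in> sX c" unfolding USX_mem by blast
    have "sX c \<subseteq> int1X (clX (USX (Sf I)))" using cI(2) Sf(2)[OF cI(1)] LX_mem by metis
    also have "\<dots> \<subseteq> clX (USX (Sf I))" by (rule int1X_sub)
    also have "\<dots> \<subseteq> clX W" unfolding clX_def W_def
    proof (rule closure_of_mono)
      show "USX (Sf I) \<subseteq> USX S" unfolding USX_def S_def using cI(1) by blast
    qed
    finally show "y \<in> clX W" using cI(3) by blast
  qed
  have "clX (USX (\<Union>F)) = clX W"
  proof
    show "clX (USX (\<Union>F)) \<subseteq> clX W" using IW unfolding clX_def by (rule closure_of_minimal) simp
    show "clX W \<subseteq> clX (USX (\<Union>F))" using WI unfolding clX_def by (rule closure_of_mono)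
  qed
  then have "D_gen (\<Union>F) = LX (int1X (clX W))" by (simp add: D_gen_char)
  moreover have "kappa_clopen_upsetX \<kappa> W" unfolding W_def by (rule USX_kcu[OF cS])
  ultimately show ?case by blast
qed

lemma BLkX_to_BLk:
  fixes \<kappa> :: "'k rel" and V :: "'a::{bounded_lattice,distrib_lattice} set set"
  assumes V: "kappa_clopen_upsetX \<kappa> V"
  shows "LX (int1X (clX V)) \<in> BLk \<kappa>"
proof -
  obtain S where S: "|S| <o \<kappa>" "V = USX S" using kcu_USX[OF V] by blast
  define G where "G = (\<lambda>c. {..c}) ` S"
  have "\<forall>I\<in>G. I \<in> BLk \<kappa>" unfolding G_def using BLk.princ by blast
  moreover have "|G| <o \<kappa>" unfolding G_def by (rule card_image_less[OF S(1)])
  ultimately have "D_gen (\<Union>G) \<in> BLk \<kappa>" by (rule BLk.join)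
  moreover have "USX (\<Union>G) = V"
  proof
    show "USX (\<Union>G) \<subseteq> V"
    proof
      fix y assume "y \<in> USX (\<Union>G)"
      then obtain x c where xc: "c \<in> S" "x \<le> c" "y \<in> sX x" unfolding USX_mem G_def by auto
      then have "y \<in> sX c" using sX_mono by blast
      then show "y \<in> V" unfolding S(2) USX_mem using xc(1) by blast
    qed
    show "V \<subseteq> USX (\<Union>G)"
    proof
      fix y assume "y \<in> V"
      then obtain c where c: "c \<in> S" "y \<in> sX c" unfolding S(2) USX_mem by blast
      then have "c \<in> \<Union>G" unfolding G_def by auto
      then show "y \<in> USX (\<Union>G)" unfolding USX_mem using c(2) by blast
    qed
  qed
  ultimately show ?thesis by (simp add: D_gen_char)
qed

lemma upX_upset: "is_upsetX (upX C)" unfolding is_upsetX_def upX_def by blast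

lemma sub_upX: "C \<subseteq> PX \<Longrightarrow> C \<subseteq> upX C" unfolding upX_def by blast

lemma upX_least: "is_upsetX W \<Longrightarrow> C \<subseteq> W \<Longrightarrow> upX C \<subseteq> W"
  unfolding upX_def is_upsetX_def by blast

lemma compl_down_upset: "is_upsetX (PX - downX C)"
  unfolding is_upsetX_def downX_def by blast

lemma downX_Un: "downX (A \<union> B) = downX A \<union> downX B" unfolding downX_def by blast

lemma downX_empty: "downX {} = {}" unfolding downX_def by blast

lemma downX_mono: "A \<subseteq> B \<Longrightarrow> downX A \<subseteq> downX B" unfolding downX_def by blast

lemma clopen_sX: "clopen_upsetX (sX (a::'a::{bounded_lattice,distrib_lattice}))"
  unfolding clopen_upsetX_def clopenX_def using open_sX closed_sX sX_upsetX by blast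

lemma clX_sub_sX:
  fixes U :: "'a::{bounded_lattice,distrib_lattice} set set"
  shows "U \<subseteq> sX u \<Longrightarrow> clX U \<subseteq> sX u"
  unfolding clX_def by (rule closure_of_minimal[OF _ closed_sX])

lemma DJ_iff:
  fixes S :: "'a::{bounded_lattice,distrib_lattice} set"
  shows "distributive_join S j \<longleftrightarrow> sX j = clX (USX S)"
proof
  assume dj: "distributive_join S j"
  show "sX j = clX (USX S)"
  proof
    show "sX j \<subseteq> clX (USX S)" by (rule DJ_sub[OF dj])
    have "\<forall>c\<in>S. c \<le> j" using dj unfolding distributive_join_def is_join_def by blast
    then have "USX S \<subseteq> sX j" unfolding USX_def using sX_mono by blast
    then show "clX (USX S) \<subseteq> sX j" by (rule clX_sub_sX)
  qed
next
  assume e: "sX j = clX (USX S)"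
  have ub: "c \<le> j" if "c \<in> S" for c
  proof -
    have "sX c \<subseteq> USX S" unfolding USX_def using that by blast
    also have "\<dots> \<subseteq> sX j" unfolding e by (rule clX_USX)
    finally show ?thesis using sX_le_iff by blast
  qed
  have least: "j \<le> u" if "\<forall>c\<in>S. c \<le> u" for u
  proof -
    have "USX S \<subseteq> sX u" unfolding USX_def using that sX_mono by blast
    then have "sX j \<subseteq> sX u" unfolding e by (rule clX_sub_sX)
    then show ?thesis using sX_le_iff by blast
  qed
  have J: "is_join ((\<lambda>s. inf a s) ` S) (inf a j)" for a
    unfolding is_join_def
  proof (intro conjI allI impI ballI)
    fix s assume "s \<in> (\<lambda>s. inf a s) ` S"
    then obtain c where "c \<in> S" "s = inf a c" by blast
    then show "s \<le> inf a j" using ub by (simp add: inf.coboundedI2)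
  next
    fix u assume H: "\<forall>s\<in>(\<lambda>s. inf a s) ` S. s \<le> u"
    have "sX a \<inter> USX S \<subseteq> sX u"
    proof
      fix y assume ya: "y \<in> sX a \<inter> USX S"
      then have "y \<in> USX S" by blast
      then obtain c0 where "c0 \<in> S" "y \<in> sX c0" unfolding USX_mem by blast
      then have c: "c0 \<in> S" "y \<in> sX a" "y \<in> sX c0" using ya by auto
      then have "y \<in> sX (inf a c0)" by (simp add: sX_inf)
      moreover have "inf a c0 \<le> u" using H c(1) by blast
      ultimately show "y \<in> sX u" using sX_mono by blast
    qed
    then have "clX (sX a \<inter> USX S) \<subseteq> sX u" by (rule clX_sub_sX)
    moreover have "sX a \<inter> clX (USX S) \<subseteq> clX (sX a \<inter> USX S)"
      unfolding clX_def by (rule openin_Int_closure_of_subset[OF open_sX])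
    ultimately have "sX (inf a j) \<subseteq> sX u" unfolding sX_inf e by blast
    then show "inf a j \<le> u" using sX_le_iff by blast
  qed
  have "is_join S j" unfolding is_join_def using ub least by blast
  then show "distributive_join S j" unfolding distributive_join_def using J by blast
qed

lemma kframe_iff:
  fixes \<kappa> :: "'k rel"
  shows "kappa_frame \<kappa> TYPE('a::{bounded_lattice,distrib_lattice}) \<longleftrightarrow>
     (\<forall>U::'a set set. kappa_clopen_upsetX \<kappa> U \<longrightarrow> clopen_upsetX (clX U))"
proof
  assume kf: "kappa_frame \<kappa> TYPE('a)"
  show "\<forall>U::'a set set. kappa_clopen_upsetX \<kappa> U \<longrightarrow> clopen_upsetX (clX U)"
  proof (intro allI impI)
    fix U :: "'a set set" assume "kappa_clopen_upsetX \<kappa> U"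
    then obtain S where S: "|S| <o \<kappa>" "U = USX S" using kcu_USX by blast
    then obtain j where "distributive_join S j" using kf unfolding kappa_frame_def by blast
    then have "sX j = clX U" unfolding S(2) DJ_iff .
    then show "clopen_upsetX (clX U)" using clopen_sX by metis
  qed
next
  assume Q: "\<forall>U::'a set set. kappa_clopen_upsetX \<kappa> U \<longrightarrow> clopen_upsetX (clX U)"
  show "kappa_frame \<kappa> TYPE('a)" unfolding kappa_frame_def
  proof (intro allI impI)
    fix S :: "'a set" assume "|S| <o \<kappa>"
    then have "kappa_clopen_upsetX \<kappa> (USX S)" by (rule USX_kcu)
    then have "clopen_upsetX (clX (USX S))" using Q by blast
    then obtain j where "clX (USX S) = sX j"
      using clopen_upset_sX unfolding clopen_upsetX_def clopenX_def by blast
    then have "distributive_join S j" unfolding DJ_iff by simp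
    then show "\<exists>j. distributive_join S j" by blast
  qed
qed

lemma complete_iff:
  "complete_lat TYPE('a::{bounded_lattice,distrib_lattice}) \<longleftrightarrow> extremally_order_disconnected TYPE('a)"
proof
  assume c: "complete_lat TYPE('a)"
  show "extremally_order_disconnected TYPE('a)" unfolding extremally_order_disconnected_def
  proof (intro allI impI)
    fix U :: "'a set set" assume U: "openin priestley_top U \<and> is_upsetX U"
    obtain j where j: "is_join (LX U) j" using c unfolding complete_lat_def by blast
    have Uj: "U \<subseteq> sX j"
    proof -
      have "U = USX (LX U)" using open_upset_US[of U] U by simp
      moreover have "USX (LX U) \<subseteq> sX j"
      proof
        fix y assume "y \<in> USX (LX U)"
        then obtain c where "c \<in> LX U" "y \<in> sX c" unfolding USX_mem by blast
        moreover have "c \<le> j" using j \<open>c \<in> LX U\<close> unfolding is_join_def by blast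
        ultimately show "y \<in> sX j" using sX_mono by blast
      qed
      ultimately show ?thesis by simp
    qed
    have "cl2X U = sX j"
    proof
      have "clX U \<subseteq> sX j" using Uj by (rule clX_sub_sX)
      then show "cl2X U \<subseteq> sX j" unfolding cl2X_def by (rule upX_least[OF sX_upsetX])
    next
      show "sX j \<subseteq> cl2X U"
      proof
        fix y assume y: "y \<in> sX j"
        show "y \<in> cl2X U"
        proof (rule ccontr)
          assume ny: "y \<notin> cl2X U"
          have yP: "y \<in> PX" using y sX_sub by blast
          obtain m where m: "clX U \<subseteq> sX m" "y \<notin> sX m"
            using sep_up[OF clX_closed yP ny[unfolded cl2X_def]] by blast
          have "U \<subseteq> clX U" using U by (intro clX_sub_gen upset_sub) (rule conjunct2)
          then have Um: "U \<subseteq> sX m" using m(1) by (rule subset_trans)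
          have "\<forall>c\<in>LX U. c \<le> m"
          proof
            fix c assume "c \<in> LX U"
            then have "sX c \<subseteq> sX m" using Um unfolding LX_mem by (rule subset_trans)
            then show "c \<le> m" unfolding sX_le_iff .
          qed
          then have "j \<le> m" using j unfolding is_join_def by blast
          then show False using y m(2) sX_mono by blast
        qed
      qed
    qed
    moreover have "clopenX (sX j)" using clopen_sX[of j] unfolding clopen_upsetX_def by (rule conjunct1)
    ultimately show "clopenX (cl2X U)" by simp
  qed
next
  assume e: "extremally_order_disconnected TYPE('a)"
  show "complete_lat TYPE('a)" unfolding complete_lat_def
  proof
    fix S :: "'a set"
    have "\<forall>U::'a set set. openin priestley_top U \<and> is_upsetX U \<longrightarrow> clopenX (cl2X U)"
      using e unfolding extremally_order_disconnected_def .
    then have "clopenX (cl2X (USX S))" using USX_open[of S] USX_upset[of S] by blast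
    then have co: "openin priestley_top (cl2X (USX S))" "closedin priestley_top (cl2X (USX S))"
      unfolding clopenX_def by auto
    have "is_upsetX (cl2X (USX S))" unfolding cl2X_def by (rule upX_upset)
    then obtain j where j: "cl2X (USX S) = sX j"
      using clopen_upset_sX[OF co] by blast
    have "is_join S j" unfolding is_join_def
    proof (intro conjI ballI allI impI)
      fix c assume "c \<in> S"
      then have "sX c \<subseteq> USX S" unfolding USX_def by blast
      also have "\<dots> \<subseteq> clX (USX S)" by (rule clX_USX)
      also have "\<dots> \<subseteq> cl2X (USX S)" unfolding cl2X_def
        by (rule sub_upX) (metis clX_def closure_of_subset_topspace topspace_PT)
      finally show "c \<le> j" unfolding j sX_le_iff .
    next
      fix u assume "\<forall>c\<in>S. c \<le> u"
      then have "USX S \<subseteq> sX u" unfolding USX_def using sX_mono by blast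
      then have "clX (USX S) \<subseteq> sX u" by (rule clX_sub_sX)
      then have "cl2X (USX S) \<subseteq> sX u" unfolding cl2X_def by (rule upX_least[OF sX_upsetX])
      then show "j \<le> u" unfolding j sX_le_iff .
    qed
    then show "\<exists>j. is_join S j" by blast
  qed
qed

lemma heyting_dist:
  fixes S :: "'a::{bounded_lattice,distrib_lattice} set"
  assumes h: "heyting TYPE('a)" and j: "is_join S j"
  shows "distributive_join S j"
  unfolding distributive_join_def
proof (intro conjI allI)
  show "is_join S j" by (rule j)
  fix a
  show "is_join ((\<lambda>s. inf a s) ` S) (inf a j)" unfolding is_join_def
  proof (intro conjI ballI allI impI)
    fix s assume "s \<in> (\<lambda>s. inf a s) ` S"
    then obtain c where "c \<in> S" "s = inf a c" by blast
    then show "s \<le> inf a j" using j unfolding is_join_def by (simp add: inf.coboundedI2)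
  next
    fix u assume H: "\<forall>s\<in>(\<lambda>s. inf a s) ` S. s \<le> u"
    obtain i where i: "\<forall>x. inf x a \<le> u \<longleftrightarrow> x \<le> i" using h unfolding heyting_def by blast
    have "\<forall>c\<in>S. c \<le> i"
    proof
      fix c assume "c \<in> S"
      then have "inf a c \<le> u" using H by blast
      then have "inf c a \<le> u" by (simp add: inf_commute)
      then show "c \<le> i" using i by blast
    qed
    then have "j \<le> i" using j unfolding is_join_def by blast
    then have "inf j a \<le> u" using i by blast
    then show "inf a j \<le> u" by (simp add: inf_commute)
  qed
qed

lemma heyting_iff:
  "heyting TYPE('a::{bounded_lattice,distrib_lattice}) \<longleftrightarrow> esakia TYPE('a)"
proof
  assume h: "heyting TYPE('a)"
  show "esakia TYPE('a)" unfolding esakia_def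
  proof (intro allI impI)
    fix U :: "'a set set" assume U: "clopenX U"
    have Uo: "openin priestley_top U" and Uc: "closedin priestley_top U" using U unfolding clopenX_def by auto
    have dc: "closedin priestley_top (downX U)" by (rule closed_downX[OF Uc])
    have "openin priestley_top (downX U)" unfolding openin_subopen[of _ "downX U"]
    proof
      fix y assume "y \<in> downX U"
      then obtain u where u: "u \<in> U" "y \<subseteq> u" "y \<in> PX" unfolding downX_def by blast
      obtain b c where bc: "u \<in> sX b - sX c" "sX b - sX c \<subseteq> U" using Uo u(1) unfolding openin_PT by blast
      obtain i where i: "\<forall>x. inf x b \<le> c \<longleftrightarrow> x \<le> i" using h unfolding heyting_def by blast
      have yT: "y \<notin> sX i"
      proof
        assume "y \<in> sX i"
        then have "i \<in> u" using u unfolding sX_def by blast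
        moreover have "b \<in> u" "u \<in> PX" using bc(1) unfolding sX_def by auto
        ultimately have "inf i b \<in> u" using pf_inf by blast
        moreover have "inf i b \<le> c" using i by blast
        ultimately have "c \<in> u" using pf_up \<open>u \<in> PX\<close> by blast
        then show False using bc(1) unfolding sX_def by blast
      qed
      have "PX - sX i \<subseteq> downX U"
      proof
        fix z assume z: "z \<in> PX - sX i"
        have "z \<in> downX (sX b - sX c)"
        proof (rule ccontr)
          assume "z \<notin> downX (sX b - sX c)"
          then obtain m where m: "z \<in> sX m" "sX m \<inter> (sX b - sX c) = {}"
            using sep_down[OF closed_basic] z by blast
          have "sX (inf m b) \<subseteq> sX c" using m(2) by (auto simp: sX_inf)
          then have "inf m b \<le> c" using sX_le_iff by blast
          then have "m \<le> i" using i by blast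
          then show False using m(1) z sX_mono by blast
        qed
        then show "z \<in> downX U" using downX_mono[OF bc(2)] by blast
      qed
      then show "\<exists>T. openin priestley_top T \<and> y \<in> T \<and> T \<subseteq> downX U"
        using open_cosX yT u(3) by blast
    qed
    then show "clopenX (downX U)" unfolding clopenX_def using dc by blast
  qed
next
  assume e: "esakia TYPE('a)"
  show "heyting TYPE('a)" unfolding heyting_def
  proof (intro allI)
    fix b c :: 'a
    have "clopenX (sX b - sX c)" unfolding clopenX_def using open_basic closed_basic by blast
    then have d: "clopenX (downX (sX b - sX c))" using e unfolding esakia_def by blast
    define W where "W = PX - downX (sX b - sX c)"
    have "openin priestley_top W" unfolding W_def using d unfolding clopenX_def by (simp add: open_compl)
    moreover have "closedin priestley_top W" unfolding W_def using d unfolding clopenX_def by (simp add: closed_compl)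
    moreover have "is_upsetX W" unfolding W_def by (rule compl_down_upset)
    ultimately obtain i where i: "W = sX i" using clopen_upset_sX by blast
    have "inf a b \<le> c \<longleftrightarrow> a \<le> i" for a
    proof -
      have "inf a b \<le> c \<longleftrightarrow> a \<in> rel_ann b c" unfolding rel_ann_def by (simp add: inf_commute)
      also have "\<dots> \<longleftrightarrow> sX a \<subseteq> W" unfolding rel_ann_LX W_def LX_mem ..
      also have "\<dots> \<longleftrightarrow> a \<le> i" unfolding i sX_le_iff ..
      finally show ?thesis .
    qed
    then show "\<exists>i. \<forall>a. inf a b \<le> c \<longleftrightarrow> a \<le> i" by blast
  qed
qed

lemma relann_fin:
  fixes Q :: "'a::{bounded_lattice,distrib_lattice} set \<Rightarrow> bool" and K :: "('a \<times> 'a) set"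
  assumes ra: "\<forall>a b::'a. Q (rel_ann a b)" and qU: "Q UNIV" and qI: "\<forall>I J. Q I \<longrightarrow> Q J \<longrightarrow> Q (I \<inter> J)"
    and K: "finite K"
  shows "Q (LX (PX - downX (\<Union>p\<in>K. sX (fst p) - sX (snd p))))"
  using K
proof induction
  case empty
  show ?case using qU by (simp add: downX_empty LX_PX)
next
  case (insert p K)
  have e: "LX (PX - downX (\<Union>p\<in>insert p K. sX (fst p) - sX (snd p))) =
           rel_ann (fst p) (snd p) \<inter> LX (PX - downX (\<Union>p\<in>K. sX (fst p) - sX (snd p)))"
    unfolding rel_ann_LX LX_Int[symmetric] by (simp add: downX_Un Diff_Un)
  show ?case unfolding e using qI ra insert.IH by blast
qed

lemma LX_downset: "is_downset (LX (Q::'a::{bounded_lattice,distrib_lattice} set set))"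
  unfolding is_downset_def
proof (intro ballI allI impI)
  fix x y :: 'a assume "x \<in> LX Q" "y \<le> x"
  then show "y \<in> LX Q" unfolding LX_mem using sX_mono[of y x] by (rule_tac subset_trans) auto
qed

lemma NL:
  fixes Q :: "'a::{bounded_lattice,distrib_lattice} set set"
  assumes o: "openin priestley_top Q" and u: "is_upsetX Q"
  shows "lower_bounds (upper_bounds (LX Q)) = LX (int1X (cl2X Q))"
proof -
  have ub: "upper_bounds (LX Q) = {v. Q \<subseteq> sX v}"
  proof
    show "upper_bounds (LX Q) \<subseteq> {v. Q \<subseteq> sX v}"
    proof
      fix v assume v: "v \<in> upper_bounds (LX Q)"
      have "Q \<subseteq> sX v"
      proof
        fix y assume "y \<in> Q"
        then obtain m where m: "y \<in> sX m" "sX m \<subseteq> Q" using open_upset_cover[OF o u] by blast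
        then have "m \<in> LX Q" unfolding LX_mem by simp
        then have "m \<le> v" using v unfolding upper_bounds_def by blast
        then show "y \<in> sX v" using m(1) sX_mono by blast
      qed
      then show "v \<in> {v. Q \<subseteq> sX v}" by simp
    qed
    show "{v. Q \<subseteq> sX v} \<subseteq> upper_bounds (LX Q)"
    proof
      fix v assume "v \<in> {v. Q \<subseteq> sX v}"
      then have Qv: "Q \<subseteq> sX v" by simp
      have "\<forall>s\<in>LX Q. s \<le> v"
      proof
        fix s assume "s \<in> LX Q"
        then have "sX s \<subseteq> sX v" using Qv unfolding LX_mem by (rule subset_trans)
        then show "s \<le> v" unfolding sX_le_iff .
      qed
      then show "v \<in> upper_bounds (LX Q)" unfolding upper_bounds_def by simp
    qed
  qed
  have QP: "Q \<subseteq> PX" by (rule upset_sub[OF u])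
  have clQ: "Q \<subseteq> clX Q" by (rule clX_sub_gen[OF QP])
  show ?thesis
  proof
    show "lower_bounds (upper_bounds (LX Q)) \<subseteq> LX (int1X (cl2X Q))"
    proof
      fix l assume l: "l \<in> lower_bounds (upper_bounds (LX Q))"
      then have lH: "\<And>v. Q \<subseteq> sX v \<Longrightarrow> l \<le> v" unfolding ub lower_bounds_def by blast
      have "sX l \<subseteq> cl2X Q"
      proof
        fix y assume y: "y \<in> sX l"
        show "y \<in> cl2X Q"
        proof (rule ccontr)
          assume ny: "y \<notin> cl2X Q"
          have yP: "y \<in> PX" using y sX_sub by blast
          obtain m where m: "clX Q \<subseteq> sX m" "y \<notin> sX m"
            using sep_up[OF clX_closed yP ny[unfolded cl2X_def]] by blast
          have "Q \<subseteq> sX m" using clQ m(1) by (rule subset_trans)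
          then have "l \<le> m" by (rule lH)
          then show False using y m(2) sX_mono by blast
        qed
      qed
      then show "l \<in> LX (int1X (cl2X Q))" unfolding LX_mem sX_sub_int1X .
    qed
  next
    show "LX (int1X (cl2X Q)) \<subseteq> lower_bounds (upper_bounds (LX Q))"
    proof
      fix l assume "l \<in> LX (int1X (cl2X Q))"
      then have l: "sX l \<subseteq> cl2X Q" unfolding LX_mem sX_sub_int1X .
      have "l \<le> v" if "v \<in> upper_bounds (LX Q)" for v
      proof -
        have "Q \<subseteq> sX v" using that unfolding ub by simp
        then have "clX Q \<subseteq> sX v" by (rule clX_sub_sX)
        then have "cl2X Q \<subseteq> sX v" unfolding cl2X_def by (rule upX_least[OF sX_upsetX])
        then have "sX l \<subseteq> sX v" using l by blast
        then show "l \<le> v" unfolding sX_le_iff .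
      qed
      then show "l \<in> lower_bounds (upper_bounds (LX Q))" unfolding lower_bounds_def by blast
    qed
  qed
qed

lemma normal_iff:
  fixes Q :: "'a::{bounded_lattice,distrib_lattice} set set"
  assumes o: "openin priestley_top Q" and u: "is_upsetX Q"
  shows "normal_ideal (LX Q) \<longleftrightarrow> int1X (cl2X Q) = Q"
proof -
  have "normal_ideal (LX Q) \<longleftrightarrow> LX Q = LX (int1X (cl2X Q))"
    unfolding normal_ideal_def NL[OF o u] using LX_downset by blast
  also have "\<dots> \<longleftrightarrow> int1X (cl2X Q) = Q"
  proof
    assume "LX Q = LX (int1X (cl2X Q))"
    then have "Q = int1X (cl2X Q)" by (rule LX_inj[OF o u int1X_open int1X_upset])
    then show "int1X (cl2X Q) = Q" by (rule sym)
  next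
    assume "int1X (cl2X Q) = Q"
    then show "LX Q = LX (int1X (cl2X Q))" by simp
  qed
  finally show ?thesis .
qed

lemma normal_Int:
  assumes "normal_ideal (N1::'a::order set)" "normal_ideal N2" shows "normal_ideal (N1 \<inter> N2)"
proof -
  have mono: "lower_bounds (upper_bounds A) \<subseteq> lower_bounds (upper_bounds B)" if "A \<subseteq> B" for A B :: "'a set"
    using that unfolding lower_bounds_def upper_bounds_def by blast
  have d: "is_downset (N1 \<inter> N2)" using assms unfolding normal_ideal_def is_downset_def by blast
  have "lower_bounds (upper_bounds (N1 \<inter> N2)) \<subseteq> N1"
    using mono[of "N1 \<inter> N2" N1] assms(1) unfolding normal_ideal_def by blast
  moreover have "lower_bounds (upper_bounds (N1 \<inter> N2)) \<subseteq> N2"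
    using mono[of "N1 \<inter> N2" N2] assms(2) unfolding normal_ideal_def by blast
  moreover have "N1 \<inter> N2 \<subseteq> lower_bounds (upper_bounds (N1 \<inter> N2))"
    unfolding lower_bounds_def upper_bounds_def by blast
  ultimately show ?thesis unfolding normal_ideal_def using d by blast
qed

lemma normal_UNIV: "normal_ideal (UNIV::'a::{bounded_lattice,distrib_lattice} set)"
proof -
  have "upper_bounds (UNIV::'a set) = {top}" unfolding upper_bounds_def using top_unique by auto
  then have "lower_bounds (upper_bounds (UNIV::'a set)) = UNIV" unfolding lower_bounds_def by auto
  then show ?thesis unfolding normal_ideal_def is_downset_def by simp
qed

lemma BLk_UNIV: "(UNIV::'a::{bounded_lattice,distrib_lattice} set) \<in> BLk \<kappa>"
proof -
  have "{..(top::'a)} = UNIV" by auto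
  then show ?thesis using BLk.princ[of "top::'a" \<kappa>] by simp
qed

lemma open_compl_down:
  fixes U :: "'a::{bounded_lattice,distrib_lattice} set set"
  assumes "closedin priestley_top U" shows "openin priestley_top (PX - downX U)"
  by (rule open_compl[OF closed_downX[OF assms]])

theorem theorem5p21:
  fixes \<kappa> :: "'k rel"
  assumes "Cinfinite \<kappa>" and "regularCard \<kappa>"
  shows
   "((complete_lat TYPE('a::{bounded_lattice,distrib_lattice}) \<and> kappa_frame \<kappa> TYPE('a))
      \<longleftrightarrow> (extremally_order_disconnected TYPE('a) \<and>
           (\<forall>U::'a set set. kappa_clopen_upsetX \<kappa> U \<longrightarrow> clopen_upsetX (clX U))))
  \<and> ((kappa_complete \<kappa> TYPE('a) \<and> heyting TYPE('a))
      \<longleftrightarrow> (esakia TYPE('a) \<and>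
           (\<forall>U::'a set set. kappa_clopen_upsetX \<kappa> U \<longrightarrow> clopen_upsetX (clX U))))
  \<and> ((\<forall>a b::'a. rel_ann a b \<in> BLk \<kappa>)
      \<longleftrightarrow> (\<forall>U::'a set set. clopenX U \<longrightarrow> PX - downX U \<in> BLkX \<kappa>))
  \<and> ((\<forall>a b::'a. normal_ideal (rel_ann a b) \<and> rel_ann a b \<in> BLk \<kappa>)
      \<longleftrightarrow> (\<forall>U::'a set set. clopenX U \<longrightarrow> PX - downX U \<in> DMX \<inter> BLkX \<kappa>))"
proof -
  note k = assms
  let ?Q = "\<forall>U::'a set set. kappa_clopen_upsetX \<kappa> U \<longrightarrow> clopen_upsetX (clX U)"
  have P1: "(complete_lat TYPE('a) \<and> kappa_frame \<kappa> TYPE('a)) \<longleftrightarrow> (extremally_order_disconnected TYPE('a) \<and> ?Q)"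
    by (simp only: complete_iff kframe_iff)
  have P2: "(kappa_complete \<kappa> TYPE('a) \<and> heyting TYPE('a)) \<longleftrightarrow> (esakia TYPE('a) \<and> ?Q)"
  proof
    assume H: "kappa_complete \<kappa> TYPE('a) \<and> heyting TYPE('a)"
    have "kappa_frame \<kappa> TYPE('a)" unfolding kappa_frame_def
    proof (intro allI impI)
      fix S :: "'a set" assume "|S| <o \<kappa>"
      then obtain j where "is_join S j" using H unfolding kappa_complete_def by blast
      then have "distributive_join S j" using heyting_dist H by blast
      then show "\<exists>j. distributive_join S j" by blast
    qed
    then have "?Q" by (simp only: kframe_iff)
    moreover have "esakia TYPE('a)" using H heyting_iff by blast
    ultimately show "esakia TYPE('a) \<and> ?Q" by blast
  next
    assume H: "esakia TYPE('a) \<and> ?Q"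
    then have "?Q" by (rule conjunct2)
    then have "kappa_frame \<kappa> TYPE('a)" by (simp only: kframe_iff)
    then have "kappa_complete \<kappa> TYPE('a)"
      unfolding kappa_frame_def kappa_complete_def distributive_join_def by blast
    moreover have "heyting TYPE('a)" using H heyting_iff by blast
    ultimately show "kappa_complete \<kappa> TYPE('a) \<and> heyting TYPE('a)" by blast
  qed
  have dec: "\<exists>K. finite K \<and> PX - downX U = PX - downX (\<Union>p\<in>K. sX (fst p) - sX (snd p))"
    if "clopenX U" for U :: "'a set set"
  proof -
    have "openin priestley_top U" "closedin priestley_top U" using that unfolding clopenX_def by auto
    then obtain K where "finite K" "U = (\<Union>p\<in>K. sX (fst p) - sX (snd p))" using clopen_basic_fin by blast
    then show ?thesis by blast
  qed
  have ou: "openin priestley_top (PX - downX U)" "is_upsetX (PX - downX U)"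
    if "clopenX U" for U :: "'a set set"
  proof -
    have "closedin priestley_top U" using that unfolding clopenX_def by auto
    then show "openin priestley_top (PX - downX U)" by (rule open_compl_down)
    show "is_upsetX (PX - downX U)" by (rule compl_down_upset)
  qed
  have toX: "PX - downX U \<in> BLkX \<kappa>" if U: "clopenX U" and B: "LX (PX - downX U) \<in> BLk \<kappa>" for U :: "'a set set"
  proof -
    obtain V where V: "kappa_clopen_upsetX \<kappa> V" "LX (PX - downX U) = LX (int1X (clX V))"
      using BLk_char[OF k B] by blast
    have "PX - downX U = int1X (clX V)"
      using LX_inj[OF ou[OF U] int1X_open int1X_upset V(2)] .
    then show ?thesis unfolding BLkX_def using V(1) by blast
  qed
  have fromX: "rel_ann a b \<in> BLk \<kappa> \<and> PX - downX (sX a - sX b) \<in> BLkX \<kappa>"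
    if H: "\<forall>U::'a set set. clopenX U \<longrightarrow> PX - downX U \<in> BLkX \<kappa>" for a b :: 'a
  proof -
    have "clopenX (sX a - sX b)" unfolding clopenX_def using open_basic closed_basic by blast
    then have "PX - downX (sX a - sX b) \<in> BLkX \<kappa>" using H by blast
    then obtain V where V: "kappa_clopen_upsetX \<kappa> V" "PX - downX (sX a - sX b) = int1X (clX V)"
      unfolding BLkX_def by blast
    have "rel_ann a b = LX (int1X (clX V))" unfolding rel_ann_LX V(2) ..
    then show ?thesis using BLkX_to_BLk[OF V(1)] \<open>PX - downX (sX a - sX b) \<in> BLkX \<kappa>\<close> by simp
  qed
  have P3: "(\<forall>a b::'a. rel_ann a b \<in> BLk \<kappa>) \<longleftrightarrow> (\<forall>U::'a set set. clopenX U \<longrightarrow> PX - downX U \<in> BLkX \<kappa>)"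
  proof
    assume H: "\<forall>a b::'a. rel_ann a b \<in> BLk \<kappa>"
    show "\<forall>U::'a set set. clopenX U \<longrightarrow> PX - downX U \<in> BLkX \<kappa>"
    proof (intro allI impI)
      fix U :: "'a set set" assume U: "clopenX U"
      obtain K where K: "finite K" "PX - downX U = PX - downX (\<Union>p\<in>K. sX (fst p) - sX (snd p))"
        using dec[OF U] by blast
      have "LX (PX - downX U) \<in> BLk \<kappa>" unfolding K(2)
        using relann_fin[of "\<lambda>I. I \<in> BLk \<kappa>", OF H BLk_UNIV _ K(1)] BLk.meet by blast
      then show "PX - downX U \<in> BLkX \<kappa>" by (rule toX[OF U])
    qed
  next
    assume H: "\<forall>U::'a set set. clopenX U \<longrightarrow> PX - downX U \<in> BLkX \<kappa>"
    show "\<forall>a b::'a. rel_ann a b \<in> BLk \<kappa>" using fromX[OF H] by blast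
  qed
  have P4: "(\<forall>a b::'a. normal_ideal (rel_ann a b) \<and> rel_ann a b \<in> BLk \<kappa>)
      \<longleftrightarrow> (\<forall>U::'a set set. clopenX U \<longrightarrow> PX - downX U \<in> DMX \<inter> BLkX \<kappa>)"
  proof
    assume H: "\<forall>a b::'a. normal_ideal (rel_ann a b) \<and> rel_ann a b \<in> BLk \<kappa>"
    show "\<forall>U::'a set set. clopenX U \<longrightarrow> PX - downX U \<in> DMX \<inter> BLkX \<kappa>"
    proof (intro allI impI)
      fix U :: "'a set set" assume U: "clopenX U"
      obtain K where K: "finite K" "PX - downX U = PX - downX (\<Union>p\<in>K. sX (fst p) - sX (snd p))"
        using dec[OF U] by blast
      have qI: "\<forall>I J. (normal_ideal I \<and> I \<in> BLk \<kappa>) \<longrightarrow> (normal_ideal J \<and> J \<in> BLk \<kappa>) \<longrightarrow>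
                 (normal_ideal (I \<inter> J) \<and> I \<inter> J \<in> BLk \<kappa>)"
        using normal_Int BLk.meet by blast
      have "normal_ideal (LX (PX - downX U)) \<and> LX (PX - downX U) \<in> BLk \<kappa>" unfolding K(2)
        by (rule relann_fin[of "\<lambda>I. normal_ideal I \<and> I \<in> BLk \<kappa>", OF H _ qI K(1)])
           (simp add: normal_UNIV BLk_UNIV)
      then have N: "normal_ideal (LX (PX - downX U))" and B: "LX (PX - downX U) \<in> BLk \<kappa>" by auto
      have "PX - downX U \<in> BLkX \<kappa>" by (rule toX[OF U B])
      moreover have "int1X (cl2X (PX - downX U)) = PX - downX U"
        using N normal_iff[OF ou[OF U]] by blast
      then have "PX - downX U \<in> DMX" unfolding DMX_def using ou[OF U] by blast
      ultimately show "PX - downX U \<in> DMX \<inter> BLkX \<kappa>" by blast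
    qed
  next
    assume H: "\<forall>U::'a set set. clopenX U \<longrightarrow> PX - downX U \<in> DMX \<inter> BLkX \<kappa>"
    show "\<forall>a b::'a. normal_ideal (rel_ann a b) \<and> rel_ann a b \<in> BLk \<kappa>"
    proof (intro allI)
      fix a b :: 'a
      have H3: "\<forall>U::'a set set. clopenX U \<longrightarrow> PX - downX U \<in> BLkX \<kappa>" using H by blast
      have "clopenX (sX a - sX b)" unfolding clopenX_def using open_basic closed_basic by blast
      then have U: "clopenX (sX a - sX b)" .
      then have "PX - downX (sX a - sX b) \<in> DMX" using H by blast
      then have "int1X (cl2X (PX - downX (sX a - sX b))) = PX - downX (sX a - sX b)"
        unfolding DMX_def by blast
      then have "normal_ideal (LX (PX - downX (sX a - sX b)))" using normal_iff[OF ou[OF U]] by blast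
      then have "normal_ideal (rel_ann a b)" unfolding rel_ann_LX .
      moreover have "rel_ann a b \<in> BLk \<kappa>" using fromX[OF H3] by blast
      ultimately show "normal_ideal (rel_ann a b) \<and> rel_ann a b \<in> BLk \<kappa>" by blast
    qed
  qed
  show ?thesis using P1 P2 P3 P4 by blast
qed

end
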